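(* Let $n,m$ be positive integers with $m+2\le n$, $G=P^m_n$ and $\mathcal R=\{G_i:i\in [n]\}$ a family of pairwise vertex-disjoint graphs. Then $$\gamma_{gr}(G\hookleftarrow \mathcal R)=\max_{I \in \tilde{\mathcal I}} \left\{\sum_{i\in I} (\gamma_{gr} (G_i)-1)+ M(I)-m(I)-|I|m\right\}+m+1.$$ Moreover, given a Grundy dominating sequence $S_i$ of $G_i$ for all $i\in [n]$ and $I^*\in \tilde{\mathcal I}$ attaining this maximum, the sequence obtained from $S_P(I^* )$ by replacing each $i\in I^*$ by $S_i$ (and each other vertex $j$ of $S_P(I^* )$ by a vertex of $G_j$) is a Grundy dominating sequence of $G\hookleftarrow \mathcal R$.
   Context: $P_n^m$ has vertex set $[n]$, distinct $i,j$ adjacent iff $|i-j|\le m$. For a non-empty set $I\subseteq[n]$, $m(I)=\min I$ and $M(I)=\max I$. $\tilde{\mathcal I}$ is the family of non-empty independent sets $I$ of $P_n^m$ with $m(I)\le m+1$ and $M(I)\ge n-m$. For $I=\{i^1<\dots<i^p\}\in\tilde{\mathcal I}$, let $S_j=(i^j,i^j+1,\dots,i^{j+1}-(m+1))$ for $j\in[p-1]$ and $S_P(I)=S_1\oplus\cdots\oplus S_{p-1}\oplus(i^p)$ (concatenation). The $X$-join product $G\hookleftarrow \mathcal R$ has vertex set $\bigcup_i V(G_i)$, the edges of all $G_i$, and all edges between $V(G_i)$ and $V(G_j)$ whenever $ij\in E(G)$. A legal dominating sequence of a graph is a sequence $(v_1,\dots,v_k)$ of distinct vertices whose set is dominating and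 such that each $N[v_i]\setminus\bigcup_{j<i}N[v_j]$ is non-empty ($N[\cdot]$ the closed neighborhood); a Grundy dominating sequence is one of maximum length, and $\gamma_{gr}$ is that length. *)

theory Defs
  imports Main
begin

record 'a graph =
  verts :: "'a set"
  adj :: "'a \<Rightarrow> 'a \<Rightarrow> bool"

definition wf_graph :: "('a, 'b) graph_scheme \<Rightarrow> bool" where
  "wf_graph G \<longleftrightarrow>
     (\<forall>x y. adj G x y \<longrightarrow> x \<in> verts G \<and> y \<in> verts G) \<and>
     (\<forall>x y. adj G x y \<longrightarrow> adj G y x) \<and>
     (\<forall>x. \<not> adj G x x)"

definition finite_graph :: "('a, 'b) graph_scheme \<Rightarrow> bool" where
  "finite_graph G \<longleftrightarrow> wf_graph G \<and> finite (verts G) \<and> verts G \<noteq> {}"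

definition cnbhd :: "('a, 'b) graph_scheme \<Rightarrow> 'a \<Rightarrow> 'a set" where
  "cnbhd G v = {v} \<union> {u \<in> verts G. adj G v u}"

definition legal_dom_seq :: "('a, 'b) graph_scheme \<Rightarrow> 'a list \<Rightarrow> bool" where
  "legal_dom_seq G s \<longleftrightarrow>
     distinct s \<and> set s \<subseteq> verts G \<and>
     (\<Union>v\<in>set s. cnbhd G v) = verts G \<and>
     (\<forall>i < length s. cnbhd G (s ! i) - (\<Union>j<i. cnbhd G (s ! j)) \<noteq> {})"

definition grundy_dom_seq :: "('a, 'b) graph_scheme \<Rightarrow> 'a list \<Rightarrow> bool" where
  "grundy_dom_seq G s \<longleftrightarrow> legal_dom_seq G s \<and>
     (\<forall>s'. legal_dom_seq G s' \<longrightarrow> length s' \<le> length s)"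

definition gamma_gr :: "('a, 'b) graph_scheme \<Rightarrow> nat" where
  "gamma_gr G = Max {length s | s. legal_dom_seq G s}"

definition path_power :: "nat \<Rightarrow> nat \<Rightarrow> nat graph" where
  "path_power n m = \<lparr> verts = {1..n},
     adj = (\<lambda>i j. i \<in> {1..n} \<and> j \<in> {1..n} \<and> i \<noteq> j \<and>
                  (i \<le> j + m \<and> j \<le> i + m)) \<rparr>"

definition xjoin :: "('i, 'c) graph_scheme \<Rightarrow> ('i \<Rightarrow> 'a graph) \<Rightarrow> 'a graph" where
  "xjoin G R = \<lparr> verts = (\<Union>i\<in>verts G. verts (R i)),
     adj = (\<lambda>x y. (\<exists>i\<in>verts G. adj (R i) x y) \<or>
                  (\<exists>i j. adj G i j \<and> x \<in> verts (R i) \<and> y \<in> verts (R j))) \<rparr>"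

definition indep_pp :: "nat \<Rightarrow> nat \<Rightarrow> nat set \<Rightarrow> bool" where
  "indep_pp n m I \<longleftrightarrow> I \<subseteq> {1..n} \<and>
     (\<forall>i\<in>I. \<forall>j\<in>I. i \<noteq> j \<longrightarrow> \<not> (i \<le> j + m \<and> j \<le> i + m))"

definition tildeI :: "nat \<Rightarrow> nat \<Rightarrow> nat set set" where
  "tildeI n m = {I. indep_pp n m I \<and> I \<noteq> {} \<and> Min I \<le> m + 1 \<and> n - m \<le> Max I}"

fun SP_list :: "nat \<Rightarrow> nat list \<Rightarrow> nat list" where
  "SP_list m [] = []"
| "SP_list m [x] = [x]"
| "SP_list m (x # y # xs) = [x..<y - m] @ SP_list m (y # xs)"

definition SP :: "nat \<Rightarrow> nat set \<Rightarrow> nat list" where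
  "SP m I = SP_list m (sorted_list_of_set I)"

definition obj :: "nat \<Rightarrow> (nat \<Rightarrow> 'a graph) \<Rightarrow> nat set \<Rightarrow> int" where
  "obj m R I = (\<Sum>i\<in>I. int (gamma_gr (R i)) - 1) + int (Max I) - int (Min I) - int (card I * m)"

end

theory Submission
  imports Defs
begin


definition lp :: "('a, 'b) graph_scheme \<Rightarrow> 'a list \<Rightarrow> bool" where
  "lp G s \<longleftrightarrow> distinct s \<and> set s \<subseteq> verts G \<and>
     (\<forall>i < length s. cnbhd G (s ! i) - (\<Union>j<i. cnbhd G (s ! j)) \<noteq> {})"

lemma UN_take: "i \<le> length s \<Longrightarrow> (\<Union>j<i. f (s ! j)) = (\<Union>v\<in>set (take i s). f v)"
proof -
  assume "i \<le> length s"
  have "set (take i s) = (\<lambda>j. s ! j) ` {..<i}"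
    using nth_image[OF \<open>i \<le> length s\<close>] by (simp add: atLeast0LessThan)
  then show ?thesis by (simp add: image_image)
qed

lemma legal_iff: "legal_dom_seq G s \<longleftrightarrow> lp G s \<and> (\<Union>v\<in>set s. cnbhd G v) = verts G"
  unfolding legal_dom_seq_def lp_def by blast

lemma lp_Nil[simp]: "lp G []" by (simp add: lp_def)

lemma lp_snoc: "lp G (s @ [x]) \<longleftrightarrow> lp G s \<and> x \<notin> set s \<and> x \<in> verts G \<and>
   cnbhd G x - (\<Union>v\<in>set s. cnbhd G v) \<noteq> {}"
proof -
  have A: "\<And>i. i < length s \<Longrightarrow> (\<Union>j<i. cnbhd G ((s@[x]) ! j)) = (\<Union>j<i. cnbhd G (s ! j))"
    by (auto simp: nth_append)
  have B: "(\<Union>j<length s. cnbhd G ((s@[x]) ! j)) = (\<Union>v\<in>set s. cnbhd G v)"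
    using UN_take[of "length s" s "cnbhd G"] by (auto simp: nth_append)
  have C: "(\<forall>i < length (s@[x]). cnbhd G ((s@[x]) ! i) - (\<Union>j<i. cnbhd G ((s@[x]) ! j)) \<noteq> {})
     \<longleftrightarrow> (\<forall>i < length s. cnbhd G (s ! i) - (\<Union>j<i. cnbhd G (s ! j)) \<noteq> {}) \<and>
         cnbhd G x - (\<Union>v\<in>set s. cnbhd G v) \<noteq> {}"
    (is "?L \<longleftrightarrow> ?R")
  proof
    assume ?L
    show ?R
    proof (intro conjI allI impI)
      fix i assume "i < length s"
      have "cnbhd G ((s@[x]) ! i) - (\<Union>j<i. cnbhd G ((s@[x]) ! j)) \<noteq> {}"
        using \<open>?L\<close>[rule_format, of i] \<open>i < length s\<close> by simp
      then show "cnbhd G (s ! i) - (\<Union>j<i. cnbhd G (s ! j)) \<noteq> {}"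
        using A[OF \<open>i < length s\<close>] \<open>i < length s\<close> by (simp add: nth_append)
    next
      have "cnbhd G ((s@[x]) ! length s) - (\<Union>j<length s. cnbhd G ((s@[x]) ! j)) \<noteq> {}"
        using \<open>?L\<close>[rule_format, of "length s"] by simp
      then show "cnbhd G x - (\<Union>v\<in>set s. cnbhd G v) \<noteq> {}" unfolding B by simp
    qed
  next
    assume ?R
    show ?L
    proof (intro allI impI)
      fix i assume "i < length (s@[x])"
      then consider "i < length s" | "i = length s" by fastforce
      then show "cnbhd G ((s@[x]) ! i) - (\<Union>j<i. cnbhd G ((s@[x]) ! j)) \<noteq> {}"
      proof cases
        case 1 then show ?thesis using \<open>?R\<close> A[OF 1] by (simp add: nth_append)
      next
        case 2 then show ?thesis using \<open>?R\<close> B by simp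
      qed
    qed
  qed
  have D1: "distinct (s@[x]) \<longleftrightarrow> distinct s \<and> x \<notin> set s" by simp
  have D2: "set (s@[x]) \<subseteq> verts G \<longleftrightarrow> set s \<subseteq> verts G \<and> x \<in> verts G" by auto
  show ?thesis unfolding lp_def D1 D2 C by blast
qed

lemma lp_take: "lp G s \<Longrightarrow> lp G (take i s)"
  unfolding lp_def
  by (auto simp: distinct_take dest: in_set_takeD)

lemma lp_nth_new: "lp G s \<Longrightarrow> i < length s \<Longrightarrow>
   cnbhd G (s ! i) - (\<Union>v\<in>set (take i s). cnbhd G v) \<noteq> {}"
proof -
  assume "lp G s" "i < length s"
  then have "cnbhd G (s ! i) - (\<Union>j<i. cnbhd G (s ! j)) \<noteq> {}" unfolding lp_def by blast
  then show ?thesis using UN_take[of i s "cnbhd G"] \<open>i < length s\<close> by simp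
qed

lemma cnbhd_sub: "x \<in> verts G \<Longrightarrow> cnbhd G x \<subseteq> verts G"
  by (auto simp: cnbhd_def)


lemma cnbhd_self: "x \<in> cnbhd G x" by (simp add: cnbhd_def)

lemma lp_length: "lp G s \<Longrightarrow> finite (verts G) \<Longrightarrow> length s \<le> card (verts G)"
proof -
  assume "lp G s" "finite (verts G)"
  then have "distinct s" "set s \<subseteq> verts G" unfolding lp_def by auto
  then show ?thesis using card_mono[OF \<open>finite (verts G)\<close>] distinct_card by metis
qed

lemma lp_extend:
  assumes "finite (verts G)"
  shows "lp G s \<Longrightarrow> \<exists>t. legal_dom_seq G t \<and> length s \<le> length t \<and>
     ((\<Union>v\<in>set s. cnbhd G v) \<noteq> verts G \<longrightarrow> length s < length t)"
proof (induction "card (verts G - (\<Union>v\<in>set s. cnbhd G v))" arbitrary: s rule: less_induct)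
  case less
  show ?case
  proof (cases "(\<Union>v\<in>set s. cnbhd G v) = verts G")
    case True
    then have "legal_dom_seq G s" using less.prems by (simp add: legal_iff)
    then show ?thesis using True by (intro exI[of _ s]) simp
  next
    case False
    have "set s \<subseteq> verts G" using less.prems unfolding lp_def by blast
    then have sub: "(\<Union>v\<in>set s. cnbhd G v) \<subseteq> verts G"
    proof (intro UN_least)
      fix v assume "set s \<subseteq> verts G" "v \<in> set s"
      then show "cnbhd G v \<subseteq> verts G" using cnbhd_sub[of v G] by blast
    qed
    then obtain u where u: "u \<in> verts G" "u \<notin> (\<Union>v\<in>set s. cnbhd G v)" using False by blast
    have us: "u \<notin> set s" using u(2) cnbhd_self[of u G] by blast
    have "u \<in> cnbhd G u - (\<Union>v\<in>set s. cnbhd G v)" using u cnbhd_self[of u G] by blast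
    then have lp2: "lp G (s @ [u])" unfolding lp_snoc using less.prems u(1) us by blast
    have "card (verts G - (\<Union>v\<in>set (s@[u]). cnbhd G v)) < card (verts G - (\<Union>v\<in>set s. cnbhd G v))"
    proof (rule psubset_card_mono)
      show "finite (verts G - (\<Union>v\<in>set s. cnbhd G v))" using assms by simp
      have e: "(\<Union>v\<in>set (s@[u]). cnbhd G v) = (\<Union>v\<in>set s. cnbhd G v) \<union> cnbhd G u" by auto
      show "verts G - (\<Union>v\<in>set (s@[u]). cnbhd G v) \<subset> verts G - (\<Union>v\<in>set s. cnbhd G v)"
        unfolding e using u cnbhd_self[of u G] by blast
    qed
    from less.hyps[OF this lp2] obtain t where "legal_dom_seq G t" "length (s@[u]) \<le> length t" by blast
    then show ?thesis by (intro exI[of _ t]) simp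
  qed
qed

lemma lengths_finite:
  assumes "finite (verts G)"
  shows "finite {length s | s. legal_dom_seq G s}"
proof -
  have "{length s | s. legal_dom_seq G s} \<subseteq> {..card (verts G)}"
  proof
    fix x assume "x \<in> {length s | s. legal_dom_seq G s}"
    then obtain s where "x = length s" "lp G s" using legal_iff by blast
    then show "x \<in> {..card (verts G)}" using lp_length assms by auto
  qed
  then show ?thesis using finite_subset by blast
qed

lemma lengths_ne:
  assumes "finite (verts G)"
  shows "{length s | s. legal_dom_seq G s} \<noteq> {}"
  using lp_extend[OF assms lp_Nil] by blast

lemma lp_le_gamma:
  assumes "finite (verts G)" "lp G s"
  shows "length s \<le> gamma_gr G"
  and "(\<Union>v\<in>set s. cnbhd G v) \<noteq> verts G \<Longrightarrow> length s < gamma_gr G"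
proof -
  obtain t where t: "legal_dom_seq G t" "length s \<le> length t"
     "(\<Union>v\<in>set s. cnbhd G v) \<noteq> verts G \<longrightarrow> length s < length t"
    using lp_extend[OF assms] by blast
  have "length t \<le> gamma_gr G" unfolding gamma_gr_def
    using t(1) lengths_finite[OF assms(1)] by (intro Max_ge) auto
  then show "length s \<le> gamma_gr G" "(\<Union>v\<in>set s. cnbhd G v) \<noteq> verts G \<Longrightarrow> length s < gamma_gr G"
    using t by auto
qed

lemma gamma_attained:
  assumes "finite (verts G)"
  shows "\<exists>s. legal_dom_seq G s \<and> length s = gamma_gr G"
proof -
  have "gamma_gr G \<in> {length s | s. legal_dom_seq G s}"
    unfolding gamma_gr_def using lengths_finite[OF assms] lengths_ne[OF assms] by (rule Max_in)
  then show ?thesis by auto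
qed

lemma grundy_exists:
  assumes "finite (verts G)"
  shows "\<exists>s. grundy_dom_seq G s"
proof -
  obtain s where s: "legal_dom_seq G s" "length s = gamma_gr G" using gamma_attained[OF assms] by blast
  have "\<forall>s'. legal_dom_seq G s' \<longrightarrow> length s' \<le> length s"
  proof (intro allI impI)
    fix s' assume "legal_dom_seq G s'"
    then have "lp G s'" using legal_iff by blast
    then show "length s' \<le> length s" using s(2) lp_le_gamma(1)[OF assms] by simp
  qed
  then show ?thesis using s unfolding grundy_dom_seq_def by blast
qed

lemma grundy_length:
  assumes "finite (verts G)" "grundy_dom_seq G s"
  shows "length s = gamma_gr G"
proof -
  obtain t where t: "legal_dom_seq G t" "length t = gamma_gr G" using gamma_attained[OF assms(1)] by blast
  have "lp G s" using assms(2) legal_iff unfolding grundy_dom_seq_def by blast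
  then have "length s \<le> gamma_gr G" using lp_le_gamma(1)[OF assms(1)] by blast
  moreover have "length t \<le> length s" using assms(2) t(1) unfolding grundy_dom_seq_def by blast
  ultimately show ?thesis using t by simp
qed

lemma gamma_pos:
  assumes "finite (verts G)" "verts G \<noteq> {}"
  shows "1 \<le> gamma_gr G"
  using lp_le_gamma(2)[OF assms(1) lp_Nil] assms(2) by simp



definition nP :: "nat \<Rightarrow> nat \<Rightarrow> nat \<Rightarrow> bool" where
  "nP m i j \<longleftrightarrow> i \<noteq> j \<and> i \<le> j + m \<and> j \<le> i + m"

lemma nP_sym: "nP m i j \<longleftrightarrow> nP m j i" unfolding nP_def by auto

lemma sum_gaps:
  fixes I U :: "nat set" and m :: nat
  assumes "finite I" "I \<noteq> {}" "U \<subseteq> {Min I..Max I}"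
    and "\<forall>a\<in>I. \<forall>b\<in>I. a < b \<and> (\<forall>c\<in>I. \<not> (a < c \<and> c < b)) \<longrightarrow> card (U \<inter> {a..<b}) + m \<le> b - a"
  shows "card (U \<inter> {..<Max I}) + m * (card I - 1) \<le> Max I - Min I"
  using assms
proof (induction I arbitrary: U rule: finite_linorder_max_induct)
  case empty
  then show ?case by simp
next
  case (insert b A)
  show ?case
  proof (cases "A = {}")
    case True
    then have "U \<inter> {..<Max (insert b A)} = {}" using insert.prems by auto
    then show ?thesis using True by simp
  next
    case False
    define a where "a = Max A"
    have fA: "finite A" by fact
    have aA: "a \<in> A" using False fA a_def by simp
    have ab: "a < b" using insert.hyps aA by blast
    have MaxI: "Max (insert b A) = b" using insert.hyps fA by (simp add: Max_insert False)
    have MinI: "Min (insert b A) = Min A" using insert.hyps fA False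
      by (simp add: Min_insert)
    have bnot: "b \<notin> A" using insert.hyps by blast
    have cardI: "card (insert b A) = card A + 1" using fA bnot by simp
    define U' where "U' = U \<inter> {..a}"
    have U'sub: "U' \<subseteq> {Min A..Max A}" using insert.prems(2) MinI a_def U'_def by auto
    have cons: "\<forall>x\<in>A. \<forall>y\<in>A. x < y \<and> (\<forall>c\<in>A. \<not> (x < c \<and> c < y)) \<longrightarrow> card (U' \<inter> {x..<y}) + m \<le> y - x"
    proof (intro ballI impI)
      fix x y assume xy: "x \<in> A" "y \<in> A" "x < y \<and> (\<forall>c\<in>A. \<not> (x < c \<and> c < y))"
      have "\<forall>c\<in>insert b A. \<not> (x < c \<and> c < y)"
      proof
        fix c assume "c \<in> insert b A"
        then show "\<not> (x < c \<and> c < y)" using xy insert.hyps by (metis insertE order.asym)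
      qed
      then have "card (U \<inter> {x..<y}) + m \<le> y - x" using insert.prems(3) xy by blast
      moreover have "y \<le> a" using Max_ge[OF fA xy(2)] a_def by simp
      then have "U' \<inter> {x..<y} = U \<inter> {x..<y}"
        unfolding U'_def by auto
      ultimately show "card (U' \<inter> {x..<y}) + m \<le> y - x" by simp
    qed
    have IH: "card (U' \<inter> {..<Max A}) + m * (card A - 1) \<le> Max A - Min A"
      using insert.IH[OF False U'sub cons] .
    have e1: "U' \<inter> {..<Max A} = U \<inter> {..<a}" unfolding U'_def a_def by auto
    have gap: "card (U \<inter> {a..<b}) + m \<le> b - a"
    proof -
      have "\<forall>c\<in>insert b A. \<not> (a < c \<and> c < b)"
      proof
        fix c assume c: "c \<in> insert b A"
        show "\<not> (a < c \<and> c < b)"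
        proof (cases "c = b")
          case True then show ?thesis by simp
        next
          case False
          then have "c \<in> A" using c by simp
          then have "c \<le> a" using Max_ge[OF fA] a_def by simp
          then show ?thesis by simp
        qed
      qed
      then show ?thesis using insert.prems(3) aA ab by blast
    qed
    have split: "U \<inter> {..<b} = (U \<inter> {..<a}) \<union> (U \<inter> {a..<b})" using ab by auto
    have X: "card (U \<inter> {..<b}) \<le> card (U \<inter> {..<a}) + card (U \<inter> {a..<b})"
      unfolding split by (rule card_Un_le)
    have mA: "Min A \<le> a" using fA aA by simp
    have "card A \<ge> 1" using False fA by (simp add: Suc_leI card_gt_0_iff)
    then have mk: "m * card A = m * (card A - 1) + m" by (cases "card A") auto
    have d1: "a - Min A + (b - a) = b - Min A" using mA ab by simp
    have IH': "card (U \<inter> {..<a}) + m * (card A - 1) \<le> a - Min A" using IH e1 a_def by simp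
    have "card (U \<inter> {..<b}) + m * card A \<le> b - Min A"
      using X mk d1 IH' gap by linarith
    then show ?thesis using MaxI MinI cardI by simp
  qed
qed



lemma sum_gaps':
  fixes I U :: "nat set" and m :: nat
  assumes "finite I" "I \<noteq> {}" "U \<subseteq> {Min I..Max I}"
    and "\<forall>a\<in>I. \<forall>b\<in>I. a < b \<and> (\<forall>c\<in>I. \<not> (a < c \<and> c < b)) \<longrightarrow> card (U \<inter> {a..<b}) + m \<le> b - a"
  shows "card U + m * (card I - 1) \<le> Max I + 1 - Min I"
proof -
  have h: "card (U \<inter> {..<Max I}) + m * (card I - 1) \<le> Max I - Min I"
    using sum_gaps[OF assms] .
  have fU: "finite U" using assms(3) finite_subset by blast
  have "U \<subseteq> (U \<inter> {..<Max I}) \<union> {Max I}" using assms(3) by auto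
  then have "card U \<le> card ((U \<inter> {..<Max I}) \<union> {Max I})" by (intro card_mono) auto
  also have "\<dots> \<le> card (U \<inter> {..<Max I}) + 1" using card_Un_le[of "U \<inter> {..<Max I}" "{Max I}"] by simp
  finally have "card U \<le> card (U \<inter> {..<Max I}) + 1" .
  moreover have "Min I \<le> Max I" using assms(1,2) by simp
  ultimately show ?thesis using h by linarith
qed

locale absx =
  fixes n m :: nat and T :: "nat set" and ft w :: "nat \<Rightarrow> nat"
  assumes T_sub: "T \<subseteq> {1..n}"
    and ft_inj: "inj_on ft T"
    and w_prop: "\<And>t. t \<in> T \<Longrightarrow> (\<exists>t'\<in>T. ft t' < ft t \<and> nP m t' t) \<Longrightarrow>
         w t \<in> {1..n} \<and> nP m t (w t) \<and> (\<forall>t'\<in>T. ft t' < ft t \<longrightarrow> \<not> nP m t' (w t))"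
    and m1: "1 \<le> m" and nm: "m + 2 \<le> n"
begin

definition "Tp = {t\<in>T. \<forall>t'\<in>T. ft t' < ft t \<longrightarrow> \<not> nP m t' t}"
definition "W = w ` (T - Tp) - Tp"

lemma Tp_sub: "Tp \<subseteq> T" unfolding Tp_def by auto

lemma TpD: "d \<in> Tp \<Longrightarrow> t' \<in> T \<Longrightarrow> ft t' < ft d \<Longrightarrow> \<not> nP m t' d"
  unfolding Tp_def by auto

lemma notTp: "t \<in> T - Tp \<Longrightarrow> \<exists>t'\<in>T. ft t' < ft t \<and> nP m t' t"
  unfolding Tp_def by auto

lemma wt: "t \<in> T - Tp \<Longrightarrow> w t \<in> {1..n} \<and> nP m t (w t) \<and> (\<forall>t'\<in>T. ft t' < ft t \<longrightarrow> \<not> nP m t' (w t))"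
  using w_prop notTp by blast

lemma ft_neq: "t \<in> T \<Longrightarrow> t' \<in> T \<Longrightarrow> t \<noteq> t' \<Longrightarrow> ft t \<noteq> ft t'"
  using ft_inj by (meson inj_on_contraD)

lemma nocross1:
  assumes d: "d \<in> Tp" and t: "t \<in> T - Tp" and "t < d" "d < w t"
  shows False
proof -
  have w: "nP m t (w t)" "\<forall>t'\<in>T. ft t' < ft t \<longrightarrow> \<not> nP m t' (w t)" using wt[OF t] by auto
  have "w t \<le> t + m" using w(1) unfolding nP_def by auto
  then have n1: "nP m d (w t)" and n2: "nP m t d" using assms unfolding nP_def by auto
  have dT: "d \<in> T" using d Tp_sub by auto
  have "d \<noteq> t" using d t by auto
  then have "ft d \<noteq> ft t" using ft_neq dT t by auto
  then consider "ft d < ft t" | "ft t < ft d" by linarith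
  then show False
  proof cases
    case 1 then show False using w(2) dT n1 by blast
  next
    case 2 then show False using TpD[OF d] t n2 by blast
  qed
qed

lemma nocross2:
  assumes d: "d \<in> Tp" and t: "t \<in> T - Tp" and "w t < d" "d < t"
  shows False
proof -
  have w: "nP m t (w t)" "\<forall>t'\<in>T. ft t' < ft t \<longrightarrow> \<not> nP m t' (w t)" using wt[OF t] by auto
  have "t \<le> w t + m" using w(1) unfolding nP_def by auto
  then have n1: "nP m d (w t)" and n2: "nP m t d" using assms unfolding nP_def by auto
  have dT: "d \<in> T" using d Tp_sub by auto
  have "d \<noteq> t" using d t by auto
  then have "ft d \<noteq> ft t" using ft_neq dT t by auto
  then consider "ft d < ft t" | "ft t < ft d" by linarith
  then show False
  proof cases
    case 1 then show False using w(2) dT n1 by blast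
  next
    case 2 then show False using TpD[OF d] t n2 by blast
  qed
qed

definition gaph :: "nat \<Rightarrow> nat \<Rightarrow> bool" where
  "gaph x y \<longleftrightarrow> 1 \<le> x \<and> y \<le> n \<and> (\<forall>z. x \<le> z \<and> z \<le> y \<longrightarrow> z \<notin> Tp) \<and>
     (x = 1 \<or> x - 1 \<in> Tp) \<and> (y = n \<or> y + 1 \<in> Tp)"

lemma events_in:
  assumes g: "gaph x y" and t: "t \<in> T - Tp" and "x \<le> w t" "w t \<le> y"
  shows "x \<le> t \<and> t \<le> y"
proof -
  have tn: "1 \<le> t" "t \<le> n" using t T_sub by auto
  have "\<not> t < x"
  proof
    assume "t < x"
    then have "x \<noteq> 1" using tn by simp
    then have d: "x - 1 \<in> Tp" using g unfolding gaph_def by auto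
    have "t \<noteq> x - 1" using d t by auto
    then have "t < x - 1" using \<open>t < x\<close> by simp
    moreover have "x - 1 < w t" using assms(3) \<open>t < x\<close> by simp
    ultimately show False using nocross1[OF d t] by blast
  qed
  moreover have "\<not> y < t"
  proof
    assume "y < t"
    then have "y \<noteq> n" using tn by simp
    then have d: "y + 1 \<in> Tp" using g unfolding gaph_def by auto
    have "t \<noteq> y + 1" using d t by auto
    then have "y + 1 < t" using \<open>y < t\<close> by simp
    moreover have "w t < y + 1" using assms(4) by simp
    ultimately show False using nocross2[OF d t] by blast
  qed
  ultimately show ?thesis by simp
qed

lemma finT: "finite T" using T_sub finite_subset by blast

lemma gap:
  assumes g: "gaph x y"
  shows "(\<forall>j\<in>W. \<not> (x \<le> j \<and> j \<le> y)) \<or>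
         (1 < x \<and> x - 1 \<in> Tp \<and> (\<forall>j\<in>W. x \<le> j \<and> j \<le> y \<longrightarrow> x + m \<le> j)) \<or>
         (y + 1 \<in> Tp \<and> (\<forall>j\<in>W. x \<le> j \<and> j \<le> y \<longrightarrow> j + m \<le> y))"
proof (cases "T \<inter> {x..y} = {}")
  case True
  have "\<forall>j\<in>W. \<not> (x \<le> j \<and> j \<le> y)"
  proof (intro ballI notI)
    fix j assume "j \<in> W" "x \<le> j \<and> j \<le> y"
    then obtain t where t: "t \<in> T - Tp" "j = w t" unfolding W_def by auto
    then have "x \<le> t \<and> t \<le> y" using events_in[OF g t(1)] \<open>x \<le> j \<and> j \<le> y\<close> by simp
    then show False using True t by auto
  qed
  then show ?thesis by blast
next
  case False
  define E where "E = T \<inter> {x-1..y+1}"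
  have fE: "finite E" unfolding E_def using finT by simp
  obtain z where z: "z \<in> T" "x \<le> z" "z \<le> y" using False by auto
  then have "z \<in> E" unfolding E_def by simp
  then have neE: "E \<noteq> {}" by auto
  have "Min (ft ` E) \<in> ft ` E" using fE neE by (intro Min_in) auto
  then obtain e0 where e0: "e0 \<in> E" "ft e0 = Min (ft ` E)" by auto
  have e0min: "\<And>e. e \<in> E \<Longrightarrow> ft e0 \<le> ft e" using e0 fE by simp
  have e0T: "e0 \<in> T" using e0 unfolding E_def by simp
  have xg1: "1 \<le> x" using g unfolding gaph_def by simp
  have notin: "\<not> (x \<le> e0 \<and> e0 \<le> y)"
  proof
    assume A: "x \<le> e0 \<and> e0 \<le> y"
    then have "e0 \<notin> Tp" using g unfolding gaph_def by auto
    then obtain t' where t': "t' \<in> T" "ft t' < ft e0" "nP m t' e0" using notTp e0T by blast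
    have "t' \<notin> E" using t'(2) e0min by fastforce
    then have "t' < x - 1 \<or> y + 1 < t'" using t'(1) unfolding E_def by auto
    moreover have t'n: "1 \<le> t'" "t' \<le> n" using t'(1) T_sub by auto
    ultimately consider "t' < x - 1" | "y + 1 < t'" by blast
    then show False
    proof cases
      case 1
      then have "x \<noteq> 1" using t'n by simp
      then have d: "x - 1 \<in> Tp" using g unfolding gaph_def by auto
      have dE: "x - 1 \<in> E" using d Tp_sub A unfolding E_def by auto
      have "nP m t' (x - 1)" using 1 A t'(3) xg1 unfolding nP_def by auto
      moreover have "ft t' < ft (x - 1)" using t'(2) e0min[OF dE] by simp
      ultimately show False using TpD[OF d t'(1)] by blast
    next
      case 2
      then have "y \<noteq> n" using t'n by simp
      then have d: "y + 1 \<in> Tp" using g unfolding gaph_def by auto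
      have dE: "y + 1 \<in> E" using d Tp_sub A unfolding E_def by auto
      have "nP m t' (y + 1)" using 2 A t'(3) unfolding nP_def by auto
      moreover have "ft t' < ft (y + 1)" using t'(2) e0min[OF dE] by simp
      ultimately show False using TpD[OF d t'(1)] by blast
    qed
  qed
  have "e0 = x - 1 \<or> e0 = y + 1" using e0(1) notin xg1 unfolding E_def by auto
  then show ?thesis
  proof
    assume ex: "e0 = x - 1"
    have "1 \<le> e0" using e0T T_sub by auto
    then have x1: "1 < x" using ex by simp
    then have d: "x - 1 \<in> Tp" using g unfolding gaph_def by auto
    have "\<forall>j\<in>W. x \<le> j \<and> j \<le> y \<longrightarrow> x + m \<le> j"
    proof (intro ballI impI)
      fix j assume j: "j \<in> W" "x \<le> j \<and> j \<le> y"
      show "x + m \<le> j"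
      proof (rule ccontr)
        assume "\<not> x + m \<le> j"
        obtain t where t: "t \<in> T - Tp" "j = w t" using j(1) unfolding W_def by auto
        have "x \<le> t \<and> t \<le> y" using events_in[OF g t(1)] j(2) t(2) by simp
        then have tE: "t \<in> E" using t(1) unfolding E_def by auto
        have "t \<noteq> e0" using t(1) d ex by auto
        then have "ft e0 < ft t" using e0min[OF tE] ft_neq[OF e0T _ ] t(1) by fastforce
        moreover have "nP m (x - 1) j" using \<open>\<not> x + m \<le> j\<close> j(2) x1 unfolding nP_def by auto
        ultimately show False using wt[OF t(1)] e0T ex t(2) by blast
      qed
    qed
    then show ?thesis using x1 d by blast
  next
    assume ey: "e0 = y + 1"
    have "y + 1 \<le> n" using e0T T_sub ey by auto
    then have d: "y + 1 \<in> Tp" using g unfolding gaph_def by auto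
    have "\<forall>j\<in>W. x \<le> j \<and> j \<le> y \<longrightarrow> j + m \<le> y"
    proof (intro ballI impI)
      fix j assume j: "j \<in> W" "x \<le> j \<and> j \<le> y"
      show "j + m \<le> y"
      proof (rule ccontr)
        assume "\<not> j + m \<le> y"
        obtain t where t: "t \<in> T - Tp" "j = w t" using j(1) unfolding W_def by auto
        have "x \<le> t \<and> t \<le> y" using events_in[OF g t(1)] j(2) t(2) by simp
        then have tE: "t \<in> E" using t(1) unfolding E_def by auto
        have "t \<noteq> e0" using t(1) d ey by auto
        then have "ft e0 < ft t" using e0min[OF tE] ft_neq[OF e0T _ ] t(1) by fastforce
        moreover have "nP m (y + 1) j" using \<open>\<not> j + m \<le> y\<close> j(2) unfolding nP_def by auto
        ultimately show False using wt[OF t(1)] e0T ey t(2) by blast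
      qed
    qed
    then show ?thesis using d by blast
  qed
qed

end


context absx
begin

definition "I0 = Tp \<union> (if (\<exists>t\<in>Tp. t \<le> m + 1) then {} else {1}) \<union> (if (\<exists>t\<in>Tp. n - m \<le> t) then {} else {n})"

lemma Tp_n: "Tp \<subseteq> {1..n}" using Tp_sub T_sub by auto

lemma Tp_indep:
  assumes "t1 \<in> Tp" "t2 \<in> Tp" "t1 \<noteq> t2"
  shows "\<not> (t1 \<le> t2 + m \<and> t2 \<le> t1 + m)"
proof -
  have T: "t1 \<in> T" "t2 \<in> T" using assms Tp_sub by auto
  have "ft t1 \<noteq> ft t2" using ft_neq[OF T assms(3)] .
  then consider "ft t1 < ft t2" | "ft t2 < ft t1" by linarith
  then show ?thesis
  proof cases
    case 1 then have "\<not> nP m t1 t2" using TpD[OF assms(2) T(1)] by blast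
    then show ?thesis using assms(3) unfolding nP_def by auto
  next
    case 2 then have "\<not> nP m t2 t1" using TpD[OF assms(1) T(2)] by blast
    then show ?thesis using assms(3) unfolding nP_def by auto
  qed
qed

lemma I0_cases: "i \<in> I0 \<Longrightarrow> i \<in> Tp \<or> (i = 1 \<and> \<not> (\<exists>t\<in>Tp. t \<le> m + 1)) \<or> (i = n \<and> \<not> (\<exists>t\<in>Tp. n - m \<le> t))"
  unfolding I0_def by (auto split: if_splits)

lemma I0_sub: "I0 \<subseteq> {1..n}"
  using Tp_n nm unfolding I0_def by auto

lemma Tp_I0: "Tp \<subseteq> I0" unfolding I0_def by auto

lemma I0_fin: "finite I0" using I0_sub finite_subset by blast

lemma I0_ne: "I0 \<noteq> {}" unfolding I0_def by auto

lemma I0_indep: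
  assumes "i \<in> I0" "j \<in> I0" "i \<noteq> j"
  shows "\<not> (i \<le> j + m \<and> j \<le> i + m)"
  using I0_cases[OF assms(1)] I0_cases[OF assms(2)]
proof (elim disjE conjE)
  assume "i \<in> Tp" "j \<in> Tp" then show ?thesis using Tp_indep assms(3) by blast
qed (use assms(3) nm in auto)

lemma Min_I0: "Min I0 \<le> m + 1"
proof (cases "\<exists>t\<in>Tp. t \<le> m + 1")
  case True
  then obtain t where "t \<in> Tp" "t \<le> m + 1" by blast
  then show ?thesis using Min_le[OF I0_fin, of t] Tp_I0 by auto
next
  case False
  then have "1 \<in> I0" unfolding I0_def by auto
  then show ?thesis using Min_le[OF I0_fin, of 1] by auto
qed

lemma Max_I0: "n - m \<le> Max I0"
proof (cases "\<exists>t\<in>Tp. n - m \<le> t")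
  case True
  then obtain t where "t \<in> Tp" "n - m \<le> t" by blast
  then show ?thesis using Max_ge[OF I0_fin, of t] Tp_I0 by auto
next
  case False
  then have "n \<in> I0" unfolding I0_def by auto
  then show ?thesis using Max_ge[OF I0_fin, of n] by auto
qed

lemma I0_tilde: "I0 \<in> tildeI n m"
  unfolding tildeI_def indep_pp_def
  using I0_sub I0_indep I0_ne Min_I0 Max_I0 by blast

lemma W_sub: "W \<subseteq> {1..n}" unfolding W_def using wt by auto

lemma W_Tp: "W \<inter> Tp = {}" unfolding W_def by auto

lemma consec:
  assumes aI: "a \<in> I0" and bI: "b \<in> I0" and ab: "a < b"
    and nc: "\<forall>c\<in>I0. \<not> (a < c \<and> c < b)"
  shows "card ((Tp \<union> W) \<inter> {a..<b}) + m \<le> b - a"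
proof -
  have bn: "b \<le> n" "1 \<le> a" using aI bI I0_sub by auto
  have aC: "a \<in> Tp \<or> a = 1" using I0_cases[OF aI] ab bn by auto
  have bC: "b \<in> Tp \<or> b = n" using I0_cases[OF bI] ab bn by auto
  have sep: "a + m < b" using I0_indep[OF aI bI] ab by auto
  define x where "x = (if a \<in> Tp then a + 1 else 1)"
  define y where "y = (if b \<in> Tp then b - 1 else n)"
  have g: "gaph x y"
    unfolding gaph_def
  proof (intro conjI allI impI)
    show "1 \<le> x" unfolding x_def by simp
    show "y \<le> n" unfolding y_def using bn by (auto split: if_splits)
    show "x = 1 \<or> x - 1 \<in> Tp" unfolding x_def by simp
    show "y = n \<or> y + 1 \<in> Tp" unfolding y_def using bn ab by auto
  next
    fix z assume z: "x \<le> z \<and> z \<le> y"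
    show "z \<notin> Tp"
    proof
      assume zT: "z \<in> Tp"
      have "a < z"
      proof (cases "a \<in> Tp")
        case True then show ?thesis using z unfolding x_def by simp
      next
        case False
        then have "a = 1" "z \<noteq> a" using aC zT by auto
        moreover have "x = 1" unfolding x_def using False by simp
        moreover have "x \<le> z" using z by simp
        ultimately show ?thesis by linarith
      qed
      moreover have "z < b"
      proof (cases "b \<in> Tp")
        case True
        then have "y = b - 1" unfolding y_def by simp
        moreover have "1 \<le> b" using bn ab by simp
        ultimately show ?thesis using z by linarith
      next
        case False
        then have "b = n" "z \<noteq> b" using bC zT by auto
        moreover have "y = n" unfolding y_def using False by simp
        moreover have "z \<le> y" using z by simp
        ultimately show ?thesis by linarith
      qed
      ultimately show False using nc Tp_I0 zT by blast
    qed
  qed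
  have Wab: "\<And>j. j \<in> W \<Longrightarrow> a \<le> j \<Longrightarrow> j < b \<Longrightarrow> x \<le> j \<and> j \<le> y"
  proof -
    fix j assume j: "j \<in> W" "a \<le> j" "j < b"
    have "j \<notin> Tp" "1 \<le> j" "j \<le> n" using j(1) W_Tp W_sub by auto
    then have ja: "a \<in> Tp \<Longrightarrow> a < j" using j(2) by (cases "a = j") auto
    show "x \<le> j \<and> j \<le> y" using j ja \<open>1 \<le> j\<close> \<open>j \<le> n\<close> unfolding x_def y_def by auto
  qed
  have Tpab: "\<And>t. t \<in> Tp \<Longrightarrow> a \<le> t \<Longrightarrow> t < b \<Longrightarrow> t = a"
    using nc Tp_I0 by fastforce
  from gap[OF g] consider
    (c1) "\<forall>j\<in>W. \<not> (x \<le> j \<and> j \<le> y)"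
  | (c2) "1 < x" "x - 1 \<in> Tp" "\<forall>j\<in>W. x \<le> j \<and> j \<le> y \<longrightarrow> x + m \<le> j"
  | (c3) "y + 1 \<in> Tp" "\<forall>j\<in>W. x \<le> j \<and> j \<le> y \<longrightarrow> j + m \<le> y"
    by blast
  then show ?thesis
  proof cases
    case c1
    have "(Tp \<union> W) \<inter> {a..<b} \<subseteq> {a}" using c1 Wab Tpab by fastforce
    then have "card ((Tp \<union> W) \<inter> {a..<b}) \<le> 1" using card_mono[of "{a}"] by fastforce
    then show ?thesis using sep by linarith
  next
    case c2
    have "a \<in> Tp" using c2(1) unfolding x_def by (auto split: if_splits)
    then have xa: "x = a + 1" unfolding x_def by simp
    have "(Tp \<union> W) \<inter> {a..<b} \<subseteq> insert a {a+1+m..<b}"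
    proof
      fix u assume u: "u \<in> (Tp \<union> W) \<inter> {a..<b}"
      show "u \<in> insert a {a+1+m..<b}"
      proof (cases "u \<in> Tp")
        case True then show ?thesis using Tpab u by auto
      next
        case False
        then have "u \<in> W" using u by auto
        then show ?thesis using Wab[of u] c2(3) u xa by auto
      qed
    qed
    then have "card ((Tp \<union> W) \<inter> {a..<b}) \<le> card (insert a {a+1+m..<b})" by (intro card_mono) auto
    also have "\<dots> \<le> 1 + (b - (a + 1 + m))" using card_insert_le_m1 by (simp add: card_insert_if)
    finally show ?thesis using sep by linarith
  next
    case c3
    have "b \<in> Tp" using c3(1) Tp_n unfolding y_def by (auto split: if_splits)
    then have yb: "y = b - 1" unfolding y_def by simp
    have "(Tp \<union> W) \<inter> {a..<b} \<subseteq> {a..<b-m}"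
    proof
      fix u assume u: "u \<in> (Tp \<union> W) \<inter> {a..<b}"
      show "u \<in> {a..<b-m}"
      proof (cases "u \<in> Tp")
        case True
        then have "u = a" using Tpab u by auto
        then show ?thesis using sep by auto
      next
        case False
        then have "u \<in> W" using u by auto
        then have "u + m \<le> y" using Wab[of u] c3(2) u by auto
        then show ?thesis using u yb sep by auto
      qed
    qed
    then have "card ((Tp \<union> W) \<inter> {a..<b}) \<le> card {a..<b-m}" by (intro card_mono) auto
    then show ?thesis using sep by simp
  qed
qed

lemma Ubound: "Tp \<union> W \<subseteq> {Min I0..Max I0}"
proof
  fix u assume u: "u \<in> Tp \<union> W"
  show "u \<in> {Min I0..Max I0}"
  proof (cases "u \<in> Tp")
    case True
    then show ?thesis using Tp_I0 I0_fin by auto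
  next
    case False
    then have uW: "u \<in> W" using u by auto
    have un: "1 \<le> u" "u \<le> n" using uW W_sub by auto
    have "Min I0 \<le> u"
    proof (rule ccontr)
      assume A: "\<not> Min I0 \<le> u"
      define \<mu> where "\<mu> = Min I0"
      have muI: "\<mu> \<in> I0" unfolding \<mu>_def using I0_fin I0_ne by simp
      have mu1: "\<mu> \<le> m + 1" using Min_I0 \<mu>_def by simp
      have "1 \<notin> I0" using Min_le[OF I0_fin, of 1] A un by auto
      have muTp: "\<mu> \<in> Tp" using I0_cases[OF muI] \<open>1 \<notin> I0\<close> muI mu1 nm by auto
      have g: "gaph 1 (\<mu> - 1)"
        unfolding gaph_def
      proof (intro conjI allI impI)
        have "\<mu> \<in> {1..n}" using muI I0_sub by blast
        then have "\<mu> \<le> n" by simp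
        then show "\<mu> - 1 \<le> n" by (meson diff_le_self order_trans)
        show "\<mu> - 1 = n \<or> \<mu> - 1 + 1 \<in> Tp" using muTp muI I0_sub by auto
      next
        fix z assume "1 \<le> z \<and> z \<le> \<mu> - 1"
        then show "z \<notin> Tp" using Min_le[OF I0_fin] Tp_I0 \<mu>_def muI I0_sub by fastforce
      qed simp_all
      from gap[OF g] show False
        using uW un A \<mu>_def mu1 by auto
    qed
    moreover have "u \<le> Max I0"
    proof (rule ccontr)
      assume A: "\<not> u \<le> Max I0"
      define M where "M = Max I0"
      have MI: "M \<in> I0" unfolding M_def using I0_fin I0_ne by simp
      have M1: "n - m \<le> M" using Max_I0 M_def by simp
      have "n \<notin> I0" using Max_ge[OF I0_fin, of n] A un by auto
      have MTp: "M \<in> Tp" using I0_cases[OF MI] \<open>n \<notin> I0\<close> MI M1 nm by auto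
      have Mn: "M < n" using A un M_def by simp
      have g: "gaph (M + 1) n"
        unfolding gaph_def
      proof (intro conjI allI impI)
        show "M + 1 = 1 \<or> M + 1 - 1 \<in> Tp" using MTp by simp
      next
        fix z assume "M + 1 \<le> z \<and> z \<le> n"
        then show "z \<notin> Tp" using Max_ge[OF I0_fin] Tp_I0 M_def by fastforce
      qed simp_all
      have "n + 1 \<notin> Tp" using Tp_n by auto
      from gap[OF g] show False
        using uW un A M_def M1 \<open>n + 1 \<notin> Tp\<close> by auto
    qed
    ultimately show ?thesis by simp
  qed
qed

lemma main_bound:
  "int (card Tp) + int (card W) + int m * (int (card I0) - 1) \<le> int (Max I0) - int (Min I0) + 1"
proof -
  have h: "card (Tp \<union> W) + m * (card I0 - 1) \<le> Max I0 + 1 - Min I0"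
    by (rule sum_gaps'[OF I0_fin I0_ne Ubound]) (use consec in blast)
  have fTp: "finite Tp" using Tp_n finite_subset by blast
  have fW: "finite W" using W_sub finite_subset by blast
  have "card (Tp \<union> W) = card Tp + card W" using card_Un_disjoint[OF fTp fW] W_Tp by auto
  then have h2: "card Tp + card W + m * (card I0 - 1) \<le> Max I0 + 1 - Min I0" using h by simp
  have c1: "card I0 \<ge> 1" using I0_fin I0_ne by (simp add: Suc_leI card_gt_0_iff)
  have mm: "Min I0 \<le> Max I0" using I0_fin I0_ne by simp
  have e1: "int (Max I0 + 1 - Min I0) = int (Max I0) - int (Min I0) + 1" using mm by simp
  have L: "int (card Tp + card W + m * (card I0 - 1)) = int (card Tp) + int (card W) + int m * (int (card I0) - 1)"
    using c1 by (simp add: of_nat_diff[OF c1])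
  have "int (card Tp + card W + m * (card I0 - 1)) \<le> int (Max I0 + 1 - Min I0)" using h2 by linarith
  then show ?thesis using e1 L by linarith
qed

end


lemma lp_filter:
  "distinct s \<Longrightarrow> set (filter P s) \<subseteq> verts G \<Longrightarrow>
   (\<forall>i<length s. P (s ! i) \<longrightarrow> cnbhd G (s ! i) - (\<Union>v\<in>set (take i s) \<inter> Collect P. cnbhd G v) \<noteq> {}) \<Longrightarrow>
   lp G (filter P s)"
proof (induction s rule: rev_induct)
  case Nil
  then show ?case by simp
next
  case (snoc x s)
  have d: "distinct s" "x \<notin> set s" using snoc.prems(1) by auto
  have sub: "set (filter P s) \<subseteq> verts G" using snoc.prems(2) by auto
  have c: "\<forall>i<length s. P (s ! i) \<longrightarrow> cnbhd G (s ! i) - (\<Union>v\<in>set (take i s) \<inter> Collect P. cnbhd G v) \<noteq> {}"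
  proof (intro allI impI)
    fix i assume i: "i < length s" "P (s ! i)"
    have "P ((s@[x]) ! i)" using i by (simp add: nth_append)
    then have "cnbhd G ((s@[x]) ! i) - (\<Union>v\<in>set (take i (s@[x])) \<inter> Collect P. cnbhd G v) \<noteq> {}"
      using snoc.prems(3) i(1) by simp
    then show "cnbhd G (s ! i) - (\<Union>v\<in>set (take i s) \<inter> Collect P. cnbhd G v) \<noteq> {}"
      using i(1) by (simp add: nth_append)
  qed
  have IH: "lp G (filter P s)" using snoc.IH[OF d(1) sub c] .
  show ?case
  proof (cases "P x")
    case False
    then show ?thesis using IH by simp
  next
    case True
    have "cnbhd G ((s@[x]) ! length s) - (\<Union>v\<in>set (take (length s) (s@[x])) \<inter> Collect P. cnbhd G v) \<noteq> {}"
      using snoc.prems(3)[rule_format, of "length s"] True by simp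
    then have new: "cnbhd G x - (\<Union>v\<in>set (filter P s). cnbhd G v) \<noteq> {}"
      by (simp add: Int_def)
    have "x \<in> verts G" using snoc.prems(2) True by simp
    then show ?thesis using IH True new d(2) by (simp add: lp_snoc)
  qed
qed

locale xj =
  fixes n m :: nat and R :: "nat \<Rightarrow> 'a graph"
  assumes m1: "1 \<le> m" and nm: "m + 2 \<le> n"
    and fg: "\<forall>i\<in>{1..n}. finite_graph (R i)"
    and disj: "\<forall>i\<in>{1..n}. \<forall>j\<in>{1..n}. i \<noteq> j \<longrightarrow> verts (R i) \<inter> verts (R j) = {}"
begin

definition "H = xjoin (path_power n m) R"
abbreviation "B i \<equiv> verts (R i)"

lemma verts_H: "verts H = (\<Union>i\<in>{1..n}. B i)"
  unfolding H_def xjoin_def path_power_def by simp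

lemma adj_H: "adj H x y \<longleftrightarrow> (\<exists>i\<in>{1..n}. adj (R i) x y) \<or>
   (\<exists>i j. i \<in> {1..n} \<and> j \<in> {1..n} \<and> nP m i j \<and> x \<in> B i \<and> y \<in> B j)"
  unfolding H_def xjoin_def path_power_def nP_def by auto

lemma wfR: "i \<in> {1..n} \<Longrightarrow> adj (R i) x y \<Longrightarrow> x \<in> B i \<and> y \<in> B i"
  using fg unfolding finite_graph_def wf_graph_def by blast

lemma finB: "i \<in> {1..n} \<Longrightarrow> finite (B i)"
  using fg unfolding finite_graph_def by blast

lemma neB: "i \<in> {1..n} \<Longrightarrow> B i \<noteq> {}"
  using fg unfolding finite_graph_def by blast

lemma blk_uniq: "i \<in> {1..n} \<Longrightarrow> j \<in> {1..n} \<Longrightarrow> x \<in> B i \<Longrightarrow> x \<in> B j \<Longrightarrow> i = j"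
  using disj by blast

lemma cnbhd_R_sub: "i \<in> {1..n} \<Longrightarrow> x \<in> B i \<Longrightarrow> cnbhd (R i) x \<subseteq> B i"
  unfolding cnbhd_def by auto

lemma cnbhd_H:
  assumes i: "i \<in> {1..n}" and x: "x \<in> B i"
  shows "cnbhd H x = cnbhd (R i) x \<union> (\<Union>j\<in>{j\<in>{1..n}. nP m i j}. B j)"
proof
  show "cnbhd H x \<subseteq> cnbhd (R i) x \<union> (\<Union>j\<in>{j\<in>{1..n}. nP m i j}. B j)"
  proof
    fix u assume u: "u \<in> cnbhd H x"
    show "u \<in> cnbhd (R i) x \<union> (\<Union>j\<in>{j\<in>{1..n}. nP m i j}. B j)"
    proof (cases "u = x")
      case True then show ?thesis by (simp add: cnbhd_def)
    next
      case False
      then have a: "adj H x u" using u unfolding cnbhd_def by auto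
      then consider (r) i' where "i' \<in> {1..n}" "adj (R i') x u"
        | (p) i' j where "i' \<in> {1..n}" "j \<in> {1..n}" "nP m i' j" "x \<in> B i'" "u \<in> B j"
        unfolding adj_H by blast
      then show ?thesis
      proof cases
        case r
        then have "x \<in> B i'" "u \<in> B i'" using wfR by auto
        then have "i' = i" using blk_uniq i x r(1) by blast
        then show ?thesis using r unfolding cnbhd_def using \<open>u \<in> B i'\<close> by auto
      next
        case p
        then have "i' = i" using blk_uniq i x by blast
        then show ?thesis using p by auto
      qed
    qed
  qed
next
  show "cnbhd (R i) x \<union> (\<Union>j\<in>{j\<in>{1..n}. nP m i j}. B j) \<subseteq> cnbhd H x"
  proof
    fix u assume u: "u \<in> cnbhd (R i) x \<union> (\<Union>j\<in>{j\<in>{1..n}. nP m i j}. B j)"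
    then consider "u = x" | "u \<in> B i" "adj (R i) x u" | j where "j \<in> {1..n}" "nP m i j" "u \<in> B j"
      unfolding cnbhd_def by blast
    then show "u \<in> cnbhd H x"
    proof cases
      case 1 then show ?thesis by (simp add: cnbhd_def)
    next
      case 2
      then have "adj H x u" unfolding adj_H using i by blast
      moreover have "u \<in> verts H" using 2 i verts_H by auto
      ultimately show ?thesis unfolding cnbhd_def by blast
    next
      case 3
      then have "adj H x u" unfolding adj_H using i x by blast
      moreover have "u \<in> verts H" using 3 verts_H by auto
      ultimately show ?thesis unfolding cnbhd_def by blast
    qed
  qed
qed

lemma cnbhd_H_R: "i \<in> {1..n} \<Longrightarrow> x \<in> B i \<Longrightarrow> cnbhd (R i) x \<subseteq> cnbhd H x"
  using cnbhd_H by blast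

lemma cnbhd_H_Bj: "i \<in> {1..n} \<Longrightarrow> x \<in> B i \<Longrightarrow> j \<in> {1..n} \<Longrightarrow> nP m i j \<Longrightarrow> B j \<subseteq> cnbhd H x"
  using cnbhd_H by blast

lemma cnbhd_H_Bi: "i \<in> {1..n} \<Longrightarrow> x \<in> B i \<Longrightarrow> cnbhd H x \<inter> B i = cnbhd (R i) x"
proof -
  assume i: "i \<in> {1..n}" and x: "x \<in> B i"
  have "(\<Union>j\<in>{j\<in>{1..n}. nP m i j}. B j) \<inter> B i = {}"
    using disj i unfolding nP_def by blast
  then show ?thesis using cnbhd_H[OF i x] cnbhd_R_sub[OF i x] by blast
qed

lemma cnbhd_H_far: "i \<in> {1..n} \<Longrightarrow> x \<in> B i \<Longrightarrow> j \<in> {1..n} \<Longrightarrow> j \<noteq> i \<Longrightarrow> \<not> nP m i j \<Longrightarrow> cnbhd H x \<inter> B j = {}"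
proof -
  assume i: "i \<in> {1..n}" and x: "x \<in> B i" and j: "j \<in> {1..n}" "j \<noteq> i" "\<not> nP m i j"
  have "cnbhd (R i) x \<inter> B j = {}" using cnbhd_R_sub[OF i x] disj i j by blast
  moreover have "(\<Union>j'\<in>{j'\<in>{1..n}. nP m i j'}. B j') \<inter> B j = {}"
  proof (rule ccontr)
    assume "(\<Union>j'\<in>{j'\<in>{1..n}. nP m i j'}. B j') \<inter> B j \<noteq> {}"
    then obtain u j' where u: "j' \<in> {1..n}" "nP m i j'" "u \<in> B j'" "u \<in> B j" by blast
    then have "j' = j" using blk_uniq[OF u(1) j(1) u(3) u(4)] by simp
    then show False using u(2) j(3) by simp
  qed
  ultimately show ?thesis using cnbhd_H[OF i x] by blast
qed

lemma cnbhd_H_verts: "x \<in> verts H \<Longrightarrow> cnbhd H x \<subseteq> verts H"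
  by (rule cnbhd_sub)

definition blk :: "'a \<Rightarrow> nat" where "blk x = (THE i. i \<in> {1..n} \<and> x \<in> B i)"

lemma blk_eq: "i \<in> {1..n} \<Longrightarrow> x \<in> B i \<Longrightarrow> blk x = i"
  unfolding blk_def using blk_uniq by blast

lemma blk_in: "x \<in> verts H \<Longrightarrow> blk x \<in> {1..n} \<and> x \<in> B (blk x)"
proof -
  assume "x \<in> verts H"
  then obtain i where "i \<in> {1..n}" "x \<in> B i" using verts_H by auto
  then show ?thesis using blk_eq by simp
qed

end


context xj
begin

lemma upper:
  assumes lps: "lp H s"
  shows "\<exists>I\<in>tildeI n m. int (length s) \<le> obj m R I + int m + 1"
proof -
  define k where "k = length s"
  define \<beta> where "\<beta> i = blk (s ! i)" for i
  have dist: "distinct s" using lps unfolding lp_def by blast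
  have sv: "\<And>i. i < k \<Longrightarrow> s ! i \<in> verts H"
    using lps unfolding lp_def k_def by (meson nth_mem subsetD)
  have \<beta>: "\<And>i. i < k \<Longrightarrow> \<beta> i \<in> {1..n} \<and> s ! i \<in> B (\<beta> i)"
    using blk_in sv unfolding \<beta>_def by blast
  define T where "T = \<beta> ` {..<k}"
  define ft where "ft t = (LEAST i. i < k \<and> \<beta> i = t)" for t
  have ftT: "\<And>t. t \<in> T \<Longrightarrow> ft t < k \<and> \<beta> (ft t) = t"
  proof -
    fix t assume "t \<in> T"
    then have "\<exists>i. i < k \<and> \<beta> i = t" unfolding T_def by auto
    then show "ft t < k \<and> \<beta> (ft t) = t" unfolding ft_def by (rule LeastI_ex)
  qed
  have ftle: "\<And>t i. i < k \<Longrightarrow> \<beta> i = t \<Longrightarrow> ft t \<le> i"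
    unfolding ft_def by (simp add: Least_le)
  have TT: "T \<subseteq> {1..n}" unfolding T_def using \<beta> by auto
  have fTT: "finite T" unfolding T_def by simp
  define Dom where "Dom i = (\<Union>v\<in>set (take i s). cnbhd H v)" for i
  have DomI: "\<And>j i. j < i \<Longrightarrow> i \<le> k \<Longrightarrow> cnbhd H (s ! j) \<subseteq> Dom i"
  proof -
    fix j i assume "j < i" "i \<le> k"
    then have "s ! j \<in> set (take i s)" unfolding k_def
      by (metis in_set_conv_nth length_take min.absorb2 nth_take)
    then show "cnbhd H (s ! j) \<subseteq> Dom i" unfolding Dom_def by blast
  qed
  have new: "\<And>i. i < k \<Longrightarrow> cnbhd H (s ! i) - Dom i \<noteq> {}"
    unfolding Dom_def k_def using lp_nth_new[OF lps] by blast
  have K1: "\<And>j i b. j < i \<Longrightarrow> i \<le> k \<Longrightarrow> b \<in> {1..n} \<Longrightarrow> nP m (\<beta> j) b \<Longrightarrow> B b \<subseteq> Dom i"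
  proof -
    fix j i b assume a: "j < i" "i \<le> k" "b \<in> {1..n}" "nP m (\<beta> j) b"
    have "j < k" using a by simp
    then have "B b \<subseteq> cnbhd H (s ! j)" using cnbhd_H_Bj \<beta> a(3,4) by blast
    then show "B b \<subseteq> Dom i" using DomI[OF a(1,2)] by blast
  qed
  have nbr: "\<And>t i. t \<in> T \<Longrightarrow> ft t < i \<Longrightarrow> i \<le> k \<Longrightarrow> (\<Union>j\<in>{j\<in>{1..n}. nP m t j}. B j) \<subseteq> Dom i"
  proof -
    fix t i assume a: "t \<in> T" "ft t < i" "i \<le> k"
    have ft: "ft t < k" "\<beta> (ft t) = t" using ftT[OF a(1)] by auto
    have tn: "t \<in> {1..n}" "s ! ft t \<in> B t" using \<beta>[OF ft(1)] ft(2) by auto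
    have "(\<Union>j\<in>{j\<in>{1..n}. nP m t j}. B j) \<subseteq> cnbhd H (s ! ft t)"
      using cnbhd_H[OF tn] by blast
    then show "(\<Union>j\<in>{j\<in>{1..n}. nP m t j}. B j) \<subseteq> Dom i" using DomI[OF a(2,3)] by blast
  qed
  have Bt: "\<And>t i. t \<in> T \<Longrightarrow> (\<exists>t'\<in>T. ft t' < ft t \<and> nP m t' t) \<Longrightarrow> ft t \<le> i \<Longrightarrow> i \<le> k \<Longrightarrow> B t \<subseteq> Dom i"
  proof -
    fix t i assume a: "t \<in> T" "\<exists>t'\<in>T. ft t' < ft t \<and> nP m t' t" "ft t \<le> i" "i \<le> k"
    then obtain t' where t': "t' \<in> T" "ft t' < ft t" "nP m t' t" by blast
    have "t \<in> {1..n}" using a(1) TT by blast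
    moreover have "ft t' < i" "\<beta> (ft t') = t'" using t'(2) a(3) ftT[OF t'(1)] by auto
    ultimately show "B t \<subseteq> Dom i" using K1[of "ft t'" i t] t'(3) a(4) by simp
  qed
  define w where "w t = (SOME b. b \<in> {1..n} \<and> nP m t b \<and> B b \<inter> (cnbhd H (s ! ft t) - Dom (ft t)) \<noteq> {})" for t
  have wex: "\<And>t. t \<in> T \<Longrightarrow> (\<exists>t'\<in>T. ft t' < ft t \<and> nP m t' t) \<Longrightarrow>
     w t \<in> {1..n} \<and> nP m t (w t) \<and> B (w t) \<inter> (cnbhd H (s ! ft t) - Dom (ft t)) \<noteq> {}"
  proof -
    fix t assume a: "t \<in> T" "\<exists>t'\<in>T. ft t' < ft t \<and> nP m t' t"
    define i where "i = ft t"
    have ik: "i < k" "\<beta> i = t" using ftT[OF a(1)] i_def by auto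
    have tn: "t \<in> {1..n}" "s ! i \<in> B t" using \<beta>[OF ik(1)] ik by auto
    have BD: "B t \<subseteq> Dom i" using Bt[OF a] ik i_def by simp
    obtain u where u: "u \<in> cnbhd H (s ! i)" "u \<notin> Dom i" using new[OF ik(1)] by blast
    have "u \<notin> cnbhd (R t) (s ! i)" using u(2) BD cnbhd_R_sub[OF tn] by blast
    then obtain b where b: "b \<in> {1..n}" "nP m t b" "u \<in> B b"
      using u(1) cnbhd_H[OF tn] by blast
    have "\<exists>b. b \<in> {1..n} \<and> nP m t b \<and> B b \<inter> (cnbhd H (s ! ft t) - Dom (ft t)) \<noteq> {}"
      using b u i_def by blast
    then show "w t \<in> {1..n} \<and> nP m t (w t) \<and> B (w t) \<inter> (cnbhd H (s ! ft t) - Dom (ft t)) \<noteq> {}"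
      unfolding w_def by (rule someI_ex)
  qed
  have wprop: "\<And>t. t \<in> T \<Longrightarrow> (\<exists>t'\<in>T. ft t' < ft t \<and> nP m t' t) \<Longrightarrow>
         w t \<in> {1..n} \<and> nP m t (w t) \<and> (\<forall>t'\<in>T. ft t' < ft t \<longrightarrow> \<not> nP m t' (w t))"
  proof -
    fix t assume a: "t \<in> T" "\<exists>t'\<in>T. ft t' < ft t \<and> nP m t' t"
    note W = wex[OF a]
    have "\<forall>t'\<in>T. ft t' < ft t \<longrightarrow> \<not> nP m t' (w t)"
    proof (intro ballI impI notI)
      fix t' assume t': "t' \<in> T" "ft t' < ft t" "nP m t' (w t)"
      have "ft t < k" "\<beta> (ft t') = t'" using ftT a(1) ftT t'(1) by auto
      then have "B (w t) \<subseteq> Dom (ft t)" using K1[of "ft t'" "ft t" "w t"] t' W by simp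
      then show False using W by blast
    qed
    then show "w t \<in> {1..n} \<and> nP m t (w t) \<and> (\<forall>t'\<in>T. ft t' < ft t \<longrightarrow> \<not> nP m t' (w t))"
      using W by blast
  qed
  have ftinj: "inj_on ft T"
  proof
    fix t1 t2 assume "t1 \<in> T" "t2 \<in> T" "ft t1 = ft t2"
    then show "t1 = t2" using ftT by metis
  qed
  interpret A: absx n m T ft w
    by unfold_locales (use TT ftinj wprop m1 nm in auto)
  define c where "c t = card {i. i < k \<and> \<beta> i = t}" for t
  have ksum: "k = (\<Sum>t\<in>T. c t)"
  proof -
    have "{..<k} = (\<Union>t\<in>T. {i. i < k \<and> \<beta> i = t})" unfolding T_def by auto
    then have "card {..<k} = card (\<Union>t\<in>T. {i. i < k \<and> \<beta> i = t})" by simp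
    also have "\<dots> = (\<Sum>t\<in>T. card {i. i < k \<and> \<beta> i = t})"
      by (rule card_UN_disjoint) (use fTT in auto)
    finally show ?thesis unfolding c_def by simp
  qed
  have c1: "\<And>t. t \<in> T - A.Tp \<Longrightarrow> c t = 1"
  proof -
    fix t assume t: "t \<in> T - A.Tp"
    have ex: "\<exists>t'\<in>T. ft t' < ft t \<and> nP m t' t" using A.notTp[OF t] .
    have tT: "t \<in> T" using t by simp
    have tn: "t \<in> {1..n}" using tT TT by blast
    have "{i. i < k \<and> \<beta> i = t} = {ft t}"
    proof
      show "{ft t} \<subseteq> {i. i < k \<and> \<beta> i = t}" using ftT[OF tT] by simp
      show "{i. i < k \<and> \<beta> i = t} \<subseteq> {ft t}"
      proof
        fix i assume i: "i \<in> {i. i < k \<and> \<beta> i = t}"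
        show "i \<in> {ft t}"
        proof (rule ccontr)
          assume "i \<notin> {ft t}"
          then have lt: "ft t < i" using ftle i by force
          have si: "s ! i \<in> B t" using \<beta> i by auto
          have "B t \<subseteq> Dom i" using Bt[OF tT ex] lt i by simp
          then have "cnbhd (R t) (s ! i) \<subseteq> Dom i" using cnbhd_R_sub[OF tn si] by blast
          moreover have "(\<Union>j\<in>{j\<in>{1..n}. nP m t j}. B j) \<subseteq> Dom i" using nbr[OF tT lt] i by simp
          ultimately have "cnbhd H (s ! i) \<subseteq> Dom i" using cnbhd_H[OF tn si] by blast
          then show False using new i by blast
        qed
      qed
    qed
    then show "c t = 1" unfolding c_def by simp
  qed
  define L where "L t = filter (\<lambda>v. blk v = t) s" for t
  have Llen: "\<And>t. length (L t) = c t"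
    unfolding L_def c_def \<beta>_def k_def by (simp add: length_filter_conv_card)
  have Lset: "\<And>t v. v \<in> set (L t) \<Longrightarrow> \<exists>i<k. v = s ! i \<and> \<beta> i = t"
    unfolding L_def \<beta>_def k_def by (auto simp: in_set_conv_nth)
  have Llp: "\<And>t. t \<in> T \<Longrightarrow> lp (R t) (L t)"
  proof -
    fix t assume tT: "t \<in> T"
    have tn: "t \<in> {1..n}" using tT TT by blast
    show "lp (R t) (L t)" unfolding L_def
    proof (rule lp_filter[OF dist])
      show "set (filter (\<lambda>v. blk v = t) s) \<subseteq> verts (R t)"
      proof
        fix v assume "v \<in> set (filter (\<lambda>v. blk v = t) s)"
        then obtain i where "i < k" "v = s ! i" "\<beta> i = t" using Lset unfolding L_def by blast
        then show "v \<in> verts (R t)" using \<beta> by auto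
      qed
      show "\<forall>i<length s. blk (s ! i) = t \<longrightarrow> cnbhd (R t) (s ! i) -
          (\<Union>v\<in>set (take i s) \<inter> {v. blk v = t}. cnbhd (R t) v) \<noteq> {}"
      proof (intro allI impI)
        fix i assume i: "i < length s" "blk (s ! i) = t"
        have ik: "i < k" "\<beta> i = t" using i unfolding k_def \<beta>_def by auto
        have si: "s ! i \<in> B t" using \<beta>[OF ik(1)] ik(2) by auto
        have tk: "\<And>v. v \<in> set (take i s) \<Longrightarrow> \<exists>j<i. v = s ! j"
          by (auto simp: in_set_conv_nth)
        show "cnbhd (R t) (s ! i) - (\<Union>v\<in>set (take i s) \<inter> {v. blk v = t}. cnbhd (R t) v) \<noteq> {}"
        proof (cases "i = ft t")
          case True
          have "set (take i s) \<inter> {v. blk v = t} = {}"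
          proof (rule ccontr)
            assume "set (take i s) \<inter> {v. blk v = t} \<noteq> {}"
            then obtain v where v: "v \<in> set (take i s)" "blk v = t" by blast
            then obtain j where j: "j < i" "v = s ! j" using tk by blast
            then have "ft t \<le> j" using ftle[of j t] ik v(2) unfolding \<beta>_def by simp
            then show False using j True by simp
          qed
          then show ?thesis using cnbhd_self[of "s ! i" "R t"] by auto
        next
          case False
          then have lt: "ft t < i" using ftle ik by force
          obtain u where u: "u \<in> cnbhd H (s ! i)" "u \<notin> Dom i" using new[OF ik(1)] by blast
          have "u \<notin> (\<Union>j\<in>{j\<in>{1..n}. nP m t j}. B j)" using nbr[OF tT lt] ik u(2) by auto
          then have u1: "u \<in> cnbhd (R t) (s ! i)" using u(1) cnbhd_H[OF tn si] by blast
          have "u \<notin> (\<Union>v\<in>set (take i s) \<inter> {v. blk v = t}. cnbhd (R t) v)"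
          proof
            assume "u \<in> (\<Union>v\<in>set (take i s) \<inter> {v. blk v = t}. cnbhd (R t) v)"
            then obtain v where v: "v \<in> set (take i s)" "blk v = t" "u \<in> cnbhd (R t) v" by blast
            then obtain j where j: "j < i" "v = s ! j" using tk by blast
            have "s ! j \<in> B t" using \<beta>[of j] j ik v(2) unfolding \<beta>_def by auto
            then have "cnbhd (R t) v \<subseteq> cnbhd H v" using cnbhd_H_R[OF tn] j by simp
            moreover have "cnbhd H v \<subseteq> Dom i" unfolding Dom_def using v(1) by blast
            ultimately show False using v(3) u(2) by blast
          qed
          then show ?thesis using u1 by blast
        qed
      qed
    qed
  qed
  have cg: "\<And>t. t \<in> T \<Longrightarrow> c t \<le> gamma_gr (R t)"
  proof -
    fix t assume tT: "t \<in> T"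
    have tn: "t \<in> {1..n}" using tT TT by blast
    show "c t \<le> gamma_gr (R t)" using lp_le_gamma(1)[OF finB[OF tn] Llp[OF tT]] Llen by simp
  qed
  have cg2: "\<And>t. t \<in> A.Tp \<Longrightarrow> t \<in> w ` (T - A.Tp) \<Longrightarrow> c t < gamma_gr (R t)"
  proof -
    fix t assume tTp: "t \<in> A.Tp" and tw: "t \<in> w ` (T - A.Tp)"
    have tT: "t \<in> T" using tTp A.Tp_sub by blast
    have tn: "t \<in> {1..n}" using tT TT by blast
    obtain t0 where t0: "t0 \<in> T - A.Tp" "t = w t0" using tw by blast
    have t0T: "t0 \<in> T" using t0 by simp
    have ex0: "\<exists>t'\<in>T. ft t' < ft t0 \<and> nP m t' t0" using A.notTp[OF t0(1)] .
    note W0 = wex[OF t0T ex0]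
    define i0 where "i0 = ft t0"
    have i0: "i0 < k" "\<beta> i0 = t0" using ftT[OF t0T] i0_def by auto
    have t0n: "t0 \<in> {1..n}" "s ! i0 \<in> B t0" using \<beta>[OF i0(1)] i0(2) by auto
    have nP0: "nP m t0 t" using W0 t0(2) by simp
    obtain u where u: "u \<in> B t" "u \<in> cnbhd H (s ! i0)" "u \<notin> Dom i0"
      using W0 t0(2) i0_def by blast
    have "t \<noteq> t0" using nP0 unfolding nP_def by simp
    then have "ft t \<noteq> ft t0" using ftinj tT t0T by (meson inj_on_contraD)
    moreover have "\<not> ft t0 < ft t" using A.TpD[OF tTp t0T] nP0 by blast
    ultimately have ftlt: "ft t < i0" using i0_def by simp
    have before: "\<And>i. i < k \<Longrightarrow> \<beta> i = t \<Longrightarrow> i < i0"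
    proof (rule ccontr)
      fix i assume i: "i < k" "\<beta> i = t" "\<not> i < i0"
      have "i \<noteq> i0" using i(2) i0(2) \<open>t \<noteq> t0\<close> by auto
      then have lt: "i0 < i" using i(3) by simp
      have si: "s ! i \<in> B t" using \<beta> i by auto
      have "B t \<subseteq> cnbhd H (s ! i0)" using cnbhd_H_Bj[OF t0n(1) t0n(2) tn nP0] .
      then have "B t \<subseteq> Dom i" using DomI[OF lt] i(1) by auto
      then have "cnbhd (R t) (s ! i) \<subseteq> Dom i" using cnbhd_R_sub[OF tn si] by blast
      moreover have "(\<Union>j\<in>{j\<in>{1..n}. nP m t j}. B j) \<subseteq> Dom i" using nbr[OF tT] ftlt lt i(1) by simp
      ultimately have "cnbhd H (s ! i) \<subseteq> Dom i" using cnbhd_H[OF tn si] by blast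
      then show False using new i(1) by blast
    qed
    have "u \<notin> (\<Union>v\<in>set (L t). cnbhd (R t) v)"
    proof
      assume "u \<in> (\<Union>v\<in>set (L t). cnbhd (R t) v)"
      then obtain v where v: "v \<in> set (L t)" "u \<in> cnbhd (R t) v" by blast
      then obtain i where i: "i < k" "v = s ! i" "\<beta> i = t" using Lset by blast
      have "i < i0" using before i by simp
      have "s ! i \<in> B t" using \<beta> i by auto
      then have "cnbhd (R t) v \<subseteq> cnbhd H v" using cnbhd_H_R[OF tn] i by simp
      also have "\<dots> \<subseteq> Dom i0" using DomI[OF \<open>i < i0\<close>] i0(1) i(2) by simp
      finally show False using v(2) u(3) by blast
    qed
    then have "(\<Union>v\<in>set (L t). cnbhd (R t) v) \<noteq> verts (R t)" using u(1) by blast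
    then show "c t < gamma_gr (R t)" using lp_le_gamma(2)[OF finB[OF tn] Llp[OF tT]] Llen by simp
  qed
  have winj: "inj_on w (T - A.Tp)"
  proof
    fix t1 t2 assume t: "t1 \<in> T - A.Tp" "t2 \<in> T - A.Tp" "w t1 = w t2"
    show "t1 = t2"
    proof (rule ccontr)
      assume ne: "t1 \<noteq> t2"
      then have "ft t1 \<noteq> ft t2" using ftinj t by (meson DiffD1 inj_on_contraD)
      then consider "ft t1 < ft t2" | "ft t2 < ft t1" by linarith
      then show False
      proof cases
        case 1
        then show False using A.wt[OF t(1)] A.wt[OF t(2)] t(3) t(1) by auto
      next
        case 2
        then show False using A.wt[OF t(1)] A.wt[OF t(2)] t(3) t(2) by auto
      qed
    qed
  qed
  define X where "X = w ` (T - A.Tp)"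
  have fTp: "finite A.Tp" using A.Tp_sub fTT finite_subset by blast
  have fX: "finite X" unfolding X_def using fTT by simp
  have cardX: "card (T - A.Tp) = card (X \<inter> A.Tp) + card A.W"
  proof -
    have "card (T - A.Tp) = card X" unfolding X_def using card_image[OF winj] by simp
    also have "X = (X \<inter> A.Tp) \<union> A.W" unfolding X_def A.W_def by blast
    then have "card X = card (X \<inter> A.Tp) + card A.W"
      using card_Un_disjoint[of "X \<inter> A.Tp" A.W] fX unfolding X_def A.W_def by auto
    finally show ?thesis .
  qed
  have k2: "k = (\<Sum>t\<in>A.Tp. c t) + card (T - A.Tp)"
  proof -
    have "(\<Sum>t\<in>T. c t) = (\<Sum>t\<in>A.Tp. c t) + (\<Sum>t\<in>T - A.Tp. c t)"
      using sum.subset_diff[OF A.Tp_sub fTT, of c] by simp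
    moreover have "(\<Sum>t\<in>T - A.Tp. c t) = card (T - A.Tp)" using c1 by simp
    ultimately show ?thesis using ksum by simp
  qed
  define g where "g t = int (gamma_gr (R t))" for t
  have S1: "(\<Sum>t\<in>A.Tp \<inter> X. int (c t)) \<le> (\<Sum>t\<in>A.Tp \<inter> X. g t - 1)"
    by (rule sum_mono) (use cg2 in \<open>force simp: g_def X_def\<close>)
  have S2: "(\<Sum>t\<in>A.Tp - X. int (c t)) \<le> (\<Sum>t\<in>A.Tp - X. g t)"
    by (rule sum_mono) (use cg A.Tp_sub in \<open>force simp: g_def\<close>)
  have split1: "(\<Sum>t\<in>A.Tp. int (c t)) = (\<Sum>t\<in>A.Tp \<inter> X. int (c t)) + (\<Sum>t\<in>A.Tp - X. int (c t))"
    using sum.Int_Diff[OF fTp] by blast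
  have split2: "(\<Sum>t\<in>A.Tp. g t) = (\<Sum>t\<in>A.Tp \<inter> X. g t) + (\<Sum>t\<in>A.Tp - X. g t)"
    using sum.Int_Diff[OF fTp] by blast
  have S1': "(\<Sum>t\<in>A.Tp \<inter> X. g t - 1) = (\<Sum>t\<in>A.Tp \<inter> X. g t) - int (card (A.Tp \<inter> X))"
    by (simp add: sum_subtractf)
  have kb: "int k \<le> (\<Sum>t\<in>A.Tp. g t) + int (card A.W)"
  proof -
    have "int k = (\<Sum>t\<in>A.Tp. int (c t)) + int (card (X \<inter> A.Tp)) + int (card A.W)"
      using k2 cardX by simp
    moreover have "X \<inter> A.Tp = A.Tp \<inter> X" by blast
    ultimately have "int k = (\<Sum>t\<in>A.Tp. int (c t)) + int (card (A.Tp \<inter> X)) + int (card A.W)" by simp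
    then show ?thesis using S1 S2 split1 split2 S1' by linarith
  qed
  have gpos: "\<And>t. t \<in> {1..n} \<Longrightarrow> 1 \<le> g t"
    unfolding g_def using gamma_pos finB neB by (metis of_nat_1 of_nat_le_iff)
  have TpI0: "(\<Sum>t\<in>A.Tp. g t - 1) \<le> (\<Sum>t\<in>A.I0. g t - 1)"
    by (rule sum_mono2[OF A.I0_fin A.Tp_I0]) (use gpos A.I0_sub in force)
  have e3: "(\<Sum>t\<in>A.Tp. g t - 1) = (\<Sum>t\<in>A.Tp. g t) - int (card A.Tp)"
    by (simp add: sum_subtractf)
  have objI: "obj m R A.I0 = (\<Sum>t\<in>A.I0. g t - 1) + int (Max A.I0) - int (Min A.I0) - int (card A.I0 * m)"
    unfolding obj_def g_def by simp
  have "int k \<le> obj m R A.I0 + int m + 1"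
    using kb TpI0 e3 objI A.main_bound by (simp add: algebra_simps)
  then show ?thesis using A.I0_tilde k_def by blast
qed

end


lemma SP_cons2: "SP_list m (x # y # xs) = [x..<y - m] @ SP_list m (y # xs)" by simp

lemma sw_hd:
  fixes y z m :: nat
  assumes "sorted_wrt (\<lambda>a b. a + m < b) (y # xs)" "z \<in> set (y # xs)"
  shows "y \<le> z"
proof (cases "z = y")
  case True then show ?thesis by simp
next
  case False
  then have "z \<in> set xs" using assms(2) by simp
  then have "y + m < z" using assms(1) by simp
  then show ?thesis by simp
qed

lemma SP_props:
  "1 \<le> m \<Longrightarrow> sorted_wrt (\<lambda>a b. a + m < b) L \<Longrightarrow> L \<noteq> [] \<Longrightarrow>
    set L \<subseteq> set (SP_list m L) \<and>
    (\<forall>q\<in>set (SP_list m L). hd L \<le> q \<and> q \<le> last L) \<and>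
    sorted_wrt (<) (SP_list m L) \<and>
    (\<forall>q\<in>set (SP_list m L). q \<notin> set L \<longrightarrow> q + m < last L) \<and>
    (\<forall>i\<in>set L. \<forall>q\<in>set (SP_list m L). q < i \<longrightarrow> q + m < i) \<and>
    (\<forall>b. hd L \<le> b \<and> b \<le> last L \<and> b \<notin> set L \<longrightarrow> (\<exists>q\<in>set (SP_list m L). q \<noteq> b \<and> b \<le> q + m \<and> q \<le> b + m)) \<and>
    length (SP_list m L) + m * (length L - 1) = last L + 1 - hd L"
proof (induction m L rule: SP_list.induct)
  case (1 m)
  then show ?case by simp
next
  case (2 m x)
  then show ?case by simp
next
  case (3 m x y xs)
  have m1: "1 \<le> m" using "3.prems"(1) .
  have sw: "sorted_wrt (\<lambda>a b. a + m < b) (y # xs)" using "3.prems"(2) by simp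
  have xy: "x + m < y" using "3.prems"(2) by simp
  have IH: "set (y # xs) \<subseteq> set (SP_list m (y # xs)) \<and>
    (\<forall>q\<in>set (SP_list m (y # xs)). y \<le> q \<and> q \<le> last (y # xs)) \<and>
    sorted_wrt (<) (SP_list m (y # xs)) \<and>
    (\<forall>q\<in>set (SP_list m (y # xs)). q \<notin> set (y # xs) \<longrightarrow> q + m < last (y # xs)) \<and>
    (\<forall>i\<in>set (y # xs). \<forall>q\<in>set (SP_list m (y # xs)). q < i \<longrightarrow> q + m < i) \<and>
    (\<forall>b. y \<le> b \<and> b \<le> last (y # xs) \<and> b \<notin> set (y # xs) \<longrightarrow> (\<exists>q\<in>set (SP_list m (y # xs)). q \<noteq> b \<and> b \<le> q + m \<and> q \<le> b + m)) \<and>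
    length (SP_list m (y # xs)) + m * (length (y # xs) - 1) = last (y # xs) + 1 - y"
    using "3.IH"[OF m1 sw] by simp
  define S' where "S' = SP_list m (y # xs)"
  have yl: "y \<le> last (y # xs)" using sw_hd[OF sw, of "last (y # xs)"] by simp
  have ygeL: "\<And>z. z \<in> set (y # xs) \<Longrightarrow> y \<le> z" using sw_hd[OF sw] by blast
  have lastx: "last (x # y # xs) = last (y # xs)" by simp
  have e: "SP_list m (x # y # xs) = [x..<y - m] @ S'" unfolding S'_def by simp
  have A: "set (x # y # xs) \<subseteq> set (SP_list m (x # y # xs))"
    unfolding e using IH xy unfolding S'_def by auto
  have B: "\<forall>q\<in>set (SP_list m (x # y # xs)). hd (x # y # xs) \<le> q \<and> q \<le> last (x # y # xs)"
  proof
    fix q assume "q \<in> set (SP_list m (x # y # xs))"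
    then consider "q \<in> set [x..<y - m]" | "q \<in> set S'" unfolding e by auto
    then show "hd (x # y # xs) \<le> q \<and> q \<le> last (x # y # xs)"
    proof cases
      case 1 then show ?thesis using yl unfolding lastx by auto
    next
      case 2 then have "y \<le> q \<and> q \<le> last (y # xs)" using IH unfolding S'_def by blast
      then show ?thesis using xy unfolding lastx by simp
    qed
  qed
  have C: "sorted_wrt (<) (SP_list m (x # y # xs))"
    unfolding e sorted_wrt_append using IH unfolding S'_def by fastforce
  have D: "\<forall>q\<in>set (SP_list m (x # y # xs)). q \<notin> set (x # y # xs) \<longrightarrow> q + m < last (x # y # xs)"
  proof (intro ballI impI)
    fix q assume q: "q \<in> set (SP_list m (x # y # xs))" "q \<notin> set (x # y # xs)"
    then consider "q \<in> set [x..<y - m]" | "q \<in> set S'" unfolding e by auto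
    then show "q + m < last (x # y # xs)"
    proof cases
      case 1 then show ?thesis using yl unfolding lastx by auto
    next
      case 2
      have "q \<notin> set (y # xs)" using q(2) by simp
      then show ?thesis using IH 2 unfolding S'_def lastx by blast
    qed
  qed
  have E: "\<forall>i\<in>set (x # y # xs). \<forall>q\<in>set (SP_list m (x # y # xs)). q < i \<longrightarrow> q + m < i"
  proof (intro ballI impI)
    fix i q assume i: "i \<in> set (x # y # xs)" and q: "q \<in> set (SP_list m (x # y # xs))" and qi: "q < i"
    consider "q \<in> set [x..<y - m]" | "q \<in> set S'" using q unfolding e by auto
    then show "q + m < i"
    proof cases
      case 1
      then have xq: "x \<le> q" "q + m < y" by auto
      then have "i \<noteq> x" using qi by auto
      then have "i \<in> set (y # xs)" using i by simp
      then have "y \<le> i" using ygeL by blast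
      then show ?thesis using xq by simp
    next
      case 2
      then have "y \<le> q" using IH unfolding S'_def by blast
      then have "i \<in> set (y # xs)" using i qi xy by auto
      then show ?thesis using IH 2 qi unfolding S'_def by blast
    qed
  qed
  have F: "\<forall>b. hd (x # y # xs) \<le> b \<and> b \<le> last (x # y # xs) \<and> b \<notin> set (x # y # xs) \<longrightarrow>
      (\<exists>q\<in>set (SP_list m (x # y # xs)). q \<noteq> b \<and> b \<le> q + m \<and> q \<le> b + m)"
  proof (intro allI impI)
    fix b assume b: "hd (x # y # xs) \<le> b \<and> b \<le> last (x # y # xs) \<and> b \<notin> set (x # y # xs)"
    have bx: "x < b" "b \<noteq> y" using b by auto
    consider "b < y - m" | "y - m \<le> b" "b < y" | "y < b" using bx by linarith
    then show "\<exists>q\<in>set (SP_list m (x # y # xs)). q \<noteq> b \<and> b \<le> q + m \<and> q \<le> b + m"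
    proof cases
      case 1
      then have "b - 1 \<in> set (SP_list m (x # y # xs))" unfolding e using bx by auto
      moreover have "b - 1 \<noteq> b" "b \<le> b - 1 + m" "b - 1 \<le> b + m" using bx m1 by auto
      ultimately show ?thesis by blast
    next
      case 2
      have "y \<in> set (SP_list m (x # y # xs))" unfolding e using IH unfolding S'_def by auto
      then show ?thesis using 2 by (intro bexI[of _ y]) auto
    next
      case 3
      have "y \<le> b \<and> b \<le> last (y # xs) \<and> b \<notin> set (y # xs)" using 3 b unfolding lastx by simp
      then obtain q where "q \<in> set S'" "q \<noteq> b" "b \<le> q + m" "q \<le> b + m"
        using IH unfolding S'_def by blast
      then show ?thesis unfolding e by auto
    qed
  qed
  have G: "length (SP_list m (x # y # xs)) + m * (length (x # y # xs) - 1) = last (x # y # xs) + 1 - hd (x # y # xs)"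
  proof -
    have l1: "length (SP_list m (x # y # xs)) = (y - m - x) + length S'" unfolding e by simp
    have l2: "m * (length (x # y # xs) - 1) = m * (length (y # xs) - 1) + m" by simp
    have IHl: "length S' + m * (length (y # xs) - 1) = last (y # xs) + 1 - y" using IH unfolding S'_def by blast
    show ?thesis unfolding l1 l2 lastx using IHl xy yl by simp
  qed
  show ?case using A B C D E F G by blast
qed

lemma sorted_last_max: "sorted (xs :: nat list) \<Longrightarrow> xs \<noteq> [] \<Longrightarrow> z \<in> set xs \<Longrightarrow> z \<le> last xs"
  by (induction xs) (auto simp: sorted_wrt_append)

lemma SL_props:
  fixes I :: "nat set"
  assumes "finite I" "I \<noteq> {}" "\<forall>i\<in>I. \<forall>j\<in>I. i \<noteq> j \<longrightarrow> \<not> (i \<le> j + m \<and> j \<le> i + m)"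
  shows "sorted_wrt (\<lambda>a b. a + m < b) (sorted_list_of_set I)"
    and "sorted_list_of_set I \<noteq> []"
    and "hd (sorted_list_of_set I) = Min I"
    and "last (sorted_list_of_set I) = Max I"
    and "set (sorted_list_of_set I) = I"
    and "length (sorted_list_of_set I) = card I"
proof -
  define L where "L = sorted_list_of_set I"
  have sL: "set L = I" unfolding L_def using assms(1) by simp
  have st: "sorted_wrt (<) L" unfolding L_def using strict_sorted_list_of_set by blast
  show "sorted_wrt (\<lambda>a b. a + m < b) (sorted_list_of_set I)"
    unfolding L_def[symmetric]
  proof (rule sorted_wrt_mono_rel[OF _ st])
    fix a b assume "a \<in> set L" "b \<in> set L" "a < b"
    then show "a + m < b" using assms(3) sL by force
  qed
  show ne: "sorted_list_of_set I \<noteq> []" using assms(1,2) by simp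
  show "hd (sorted_list_of_set I) = Min I" using sorted_list_of_set_nonempty[OF assms(1,2)] by simp
  have "sorted L" unfolding L_def by simp
  moreover have neL: "L \<noteq> []" using ne L_def by simp
  ultimately have "\<forall>z\<in>I. z \<le> last L" using sorted_last_max[of L] sL by blast
  moreover have "last L \<in> I" using ne sL L_def by (metis last_in_set)
  ultimately show "last (sorted_list_of_set I) = Max I"
    unfolding L_def[symmetric] using assms(1) by (metis Max_eqI)
  show "set (sorted_list_of_set I) = I" using sL L_def by simp
  show "length (sorted_list_of_set I) = card I" by simp
qed



context xj
begin

lemma grundy_lp: "i \<in> {1..n} \<Longrightarrow> grundy_dom_seq (R i) s \<Longrightarrow> lp (R i) s \<and> set s \<subseteq> B i"
  unfolding grundy_dom_seq_def legal_iff lp_def by blast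

lemma app_block:
  assumes A: "lp H A" and q: "q \<in> {1..n}" and dj: "\<forall>v\<in>set A. cnbhd H v \<inter> B q = {}"
  shows "lp (R q) Sq \<Longrightarrow> lp H (A @ Sq)"
proof (induction Sq rule: rev_induct)
  case Nil
  then show ?case using A by simp
next
  case (snoc x S0)
  have h: "lp (R q) S0" "x \<notin> set S0" "x \<in> B q" "cnbhd (R q) x - (\<Union>v\<in>set S0. cnbhd (R q) v) \<noteq> {}"
    using snoc.prems unfolding lp_snoc by auto
  have IH: "lp H (A @ S0)" using snoc.IH[OF h(1)] .
  have S0B: "set S0 \<subseteq> B q" using h(1) unfolding lp_def by blast
  have xA: "x \<notin> set A"
  proof
    assume "x \<in> set A"
    then have "cnbhd H x \<inter> B q = {}" using dj by blast
    then show False using cnbhd_self[of x H] h(3) by blast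
  qed
  have xv: "x \<in> verts H" using h(3) q verts_H by blast
  obtain u where u: "u \<in> cnbhd (R q) x" "u \<notin> (\<Union>v\<in>set S0. cnbhd (R q) v)" using h(4) by blast
  have uB: "u \<in> B q" using cnbhd_R_sub[OF q h(3)] u(1) by blast
  have uH: "u \<in> cnbhd H x" using cnbhd_H_R[OF q h(3)] u(1) by blast
  have "u \<notin> (\<Union>v\<in>set (A @ S0). cnbhd H v)"
  proof
    assume "u \<in> (\<Union>v\<in>set (A @ S0). cnbhd H v)"
    then obtain v where v: "v \<in> set A \<or> v \<in> set S0" "u \<in> cnbhd H v" by auto
    from v(1) show False
    proof
      assume "v \<in> set A" then show False using dj v(2) uB by blast
    next
      assume "v \<in> set S0"
      then have "v \<in> B q" using S0B by blast
      then have "cnbhd H v \<inter> B q = cnbhd (R q) v" using cnbhd_H_Bi[OF q] by blast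
      then show False using u(2) uB v(2) \<open>v \<in> set S0\<close> by blast
    qed
  qed
  then have "cnbhd H x - (\<Union>v\<in>set (A @ S0). cnbhd H v) \<noteq> {}" using uH by blast
  then have "lp H ((A @ S0) @ [x])" unfolding lp_snoc using IH xA h(2) xv by simp
  then show ?case by simp
qed

lemma seq_lp:
  assumes Sg: "\<forall>i\<in>{1..n}. grundy_dom_seq (R i) (S i)" and f: "\<forall>j\<in>{1..n}. f j \<in> B j"
  shows "sorted_wrt (<) Q \<Longrightarrow> set Q \<subseteq> {1..n} \<Longrightarrow>
     (\<forall>q\<in>set Q. q \<in> I \<longrightarrow> (\<forall>q'\<in>set Q. q' < q \<longrightarrow> q' + m < q)) \<Longrightarrow>
     (\<forall>q\<in>set Q. q \<notin> I \<longrightarrow> q + m \<le> n) \<Longrightarrow>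
     lp H (concat (map (\<lambda>j. if j \<in> I then S j else [f j]) Q))"
proof (induction Q rule: rev_induct)
  case Nil
  then show ?case by simp
next
  case (snoc q Q0)
  define bs where "bs j = (if j \<in> I then S j else [f j])" for j
  define A where "A = concat (map bs Q0)"
  have h1: "sorted_wrt (<) Q0" "\<forall>q'\<in>set Q0. q' < q" using snoc.prems(1) by (auto simp: sorted_wrt_append)
  have h2: "set Q0 \<subseteq> {1..n}" "q \<in> {1..n}" using snoc.prems(2) by auto
  have h3: "\<forall>q\<in>set Q0. q \<in> I \<longrightarrow> (\<forall>q'\<in>set Q0. q' < q \<longrightarrow> q' + m < q)" using snoc.prems(3) by auto
  have h4: "\<forall>q\<in>set Q0. q \<notin> I \<longrightarrow> q + m \<le> n" using snoc.prems(4) by auto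
  have IH: "lp H A" using snoc.IH[OF h1(1) h2(1) h3 h4] unfolding A_def bs_def .
  have blocks: "\<And>v. v \<in> set A \<Longrightarrow> \<exists>q'\<in>set Q0. v \<in> B q'"
  proof -
    fix v assume "v \<in> set A"
    then obtain q' where q': "q' \<in> set Q0" "v \<in> set (bs q')" unfolding A_def by auto
    have q'n: "q' \<in> {1..n}" using q' h2 by blast
    have "v \<in> B q'"
    proof (cases "q' \<in> I")
      case True
      have "grundy_dom_seq (R q') (S q')" using Sg q'n by blast
      then have "set (S q') \<subseteq> B q'" using grundy_lp[OF q'n] by blast
      then show ?thesis using q' True unfolding bs_def by auto
    next
      case False then show ?thesis using q' f q'n unfolding bs_def by auto
    qed
    then show "\<exists>q'\<in>set Q0. v \<in> B q'" using q' by blast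
  qed
  have eq: "concat (map bs (Q0 @ [q])) = A @ bs q" unfolding A_def by simp
  have "lp H (A @ bs q)"
  proof (cases "q \<in> I")
    case True
    have dj: "\<forall>v\<in>set A. cnbhd H v \<inter> B q = {}"
    proof
      fix v assume "v \<in> set A"
      then obtain q' where q': "q' \<in> set Q0" "v \<in> B q'" using blocks by blast
      have "q' < q" using h1(2) q'(1) by blast
      moreover have "\<forall>q''\<in>set (Q0 @ [q]). q'' < q \<longrightarrow> q'' + m < q" using snoc.prems(3) True by simp
      ultimately have "q' + m < q" using q'(1) by simp
      then have "q' \<noteq> q" "\<not> nP m q' q" unfolding nP_def by auto
      then show "cnbhd H v \<inter> B q = {}" using cnbhd_H_far q' h2 by blast
    qed
    have "lp (R q) (S q)" using grundy_lp[OF h2(2)] Sg h2(2) by blast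
    then show ?thesis using app_block[OF IH h2(2) dj] True unfolding bs_def by simp
  next
    case False
    have bq: "bs q = [f q]" using False unfolding bs_def by simp
    have fq: "f q \<in> B q" using f h2(2) by blast
    have qm: "q + m \<le> n" using snoc.prems(4) False by simp
    have qmn: "q + m \<in> {1..n}" using qm h2(2) by simp
    obtain u where u: "u \<in> B (q + m)" using neB[OF qmn] by blast
    have nq: "nP m q (q + m)" using m1 unfolding nP_def by simp
    have uH: "u \<in> cnbhd H (f q)" using cnbhd_H_Bj[OF h2(2) fq qmn nq] u by blast
    have fA: "f q \<notin> set A"
    proof
      assume "f q \<in> set A"
      then obtain q' where q': "q' \<in> set Q0" "f q \<in> B q'" using blocks by blast
      have "q' = q" using blk_uniq[of q' q "f q"] q' h2 fq by blast
      then show False using h1(2) q'(1) by blast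
    qed
    have "u \<notin> (\<Union>v\<in>set A. cnbhd H v)"
    proof
      assume "u \<in> (\<Union>v\<in>set A. cnbhd H v)"
      then obtain v where v: "v \<in> set A" "u \<in> cnbhd H v" by blast
      then obtain q' where q': "q' \<in> set Q0" "v \<in> B q'" using blocks by blast
      have "q' < q" using h1(2) q'(1) by blast
      then have "q + m \<noteq> q'" "\<not> nP m q' (q + m)" unfolding nP_def by auto
      then have "cnbhd H v \<inter> B (q + m) = {}" using cnbhd_H_far[of q' v "q + m"] q' h2 qmn by blast
      then show False using u v(2) by blast
    qed
    then have "cnbhd H (f q) - (\<Union>v\<in>set A. cnbhd H v) \<noteq> {}" using uH by blast
    moreover have "f q \<in> verts H" using fq h2(2) verts_H by blast
    ultimately have "lp H (A @ [f q])" unfolding lp_snoc using IH fA by simp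
    then show ?thesis using bq by simp
  qed
  then show ?case using eq unfolding bs_def by simp
qed

end


context xj
begin

lemma construct:
  assumes Itil: "I \<in> tildeI n m"
    and Sg: "\<forall>i\<in>{1..n}. grundy_dom_seq (R i) (S i)" and f: "\<forall>j\<in>{1..n}. f j \<in> B j"
  shows "legal_dom_seq H (concat (map (\<lambda>j. if j \<in> I then S j else [f j]) (SP m I))) \<and>
         int (length (concat (map (\<lambda>j. if j \<in> I then S j else [f j]) (SP m I)))) = obj m R I + int m + 1"
proof -
  define bs where "bs j = (if j \<in> I then S j else [f j])" for j
  define Q where "Q = SP m I"
  define seq where "seq = concat (map bs Q)"
  have I1: "I \<subseteq> {1..n}" "\<forall>i\<in>I. \<forall>j\<in>I. i \<noteq> j \<longrightarrow> \<not> (i \<le> j + m \<and> j \<le> i + m)"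
    "I \<noteq> {}" "Min I \<le> m + 1" "n - m \<le> Max I"
    using Itil unfolding tildeI_def indep_pp_def by auto
  have fI: "finite I" using I1(1) finite_subset by blast
  note SL = SL_props[OF fI I1(3) I1(2)]
  define L where "L = sorted_list_of_set I"
  have QL: "Q = SP_list m L" unfolding Q_def L_def SP_def by simp
  note SPp = SP_props[OF m1 SL(1) SL(2)]
  have Lh: "hd L = Min I" "last L = Max I" "set L = I" "length L = card I"
    using SL unfolding L_def by auto
  have Q1: "I \<subseteq> set Q" using SPp Lh QL unfolding L_def by simp
  have Q2: "\<forall>q\<in>set Q. Min I \<le> q \<and> q \<le> Max I" using SPp Lh QL unfolding L_def by simp
  have Q3: "sorted_wrt (<) Q" using SPp QL unfolding L_def by simp
  have Q4: "\<forall>q\<in>set Q. q \<notin> I \<longrightarrow> q + m < Max I" using SPp Lh QL unfolding L_def by simp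
  have Q5: "\<forall>i\<in>I. \<forall>q\<in>set Q. q < i \<longrightarrow> q + m < i" using SPp Lh QL unfolding L_def by simp
  have Q6: "\<forall>b. Min I \<le> b \<and> b \<le> Max I \<and> b \<notin> I \<longrightarrow> (\<exists>q\<in>set Q. q \<noteq> b \<and> b \<le> q + m \<and> q \<le> b + m)"
    using SPp Lh QL unfolding L_def by simp
  have Q7: "length Q + m * (card I - 1) = Max I + 1 - Min I" using SPp Lh QL unfolding L_def by simp
  have MinI: "Min I \<in> I" "Max I \<in> I" using fI I1(3) by auto
  have Qn: "set Q \<subseteq> {1..n}" using Q2 MinI I1(1) by fastforce
  have Q4': "\<forall>q\<in>set Q. q \<notin> I \<longrightarrow> q + m \<le> n" using Q4 MinI I1(1) by fastforce
  have lpseq: "lp H seq" unfolding seq_def bs_def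
    by (rule seq_lp[OF Sg f Q3 Qn]) (use Q5 Q4' in auto)
  have inseq: "\<And>q x. q \<in> set Q \<Longrightarrow> x \<in> set (bs q) \<Longrightarrow> x \<in> set seq"
    unfolding seq_def by auto
  have bsB: "\<And>q. q \<in> set Q \<Longrightarrow> \<exists>x\<in>set (bs q). x \<in> B q"
  proof -
    fix q assume q: "q \<in> set Q"
    have qn: "q \<in> {1..n}" using q Qn by blast
    show "\<exists>x\<in>set (bs q). x \<in> B q"
    proof (cases "q \<in> I")
      case True
      have g: "grundy_dom_seq (R q) (S q)" using Sg qn by blast
      then have "(\<Union>v\<in>set (S q). cnbhd (R q) v) = B q" unfolding grundy_dom_seq_def legal_iff by blast
      then have "set (S q) \<noteq> {}" using neB[OF qn] by auto
      then obtain x where "x \<in> set (S q)" by (meson ex_in_conv)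
      moreover have "set (S q) \<subseteq> B q" using grundy_lp[OF qn g] by blast
      ultimately show ?thesis using True unfolding bs_def by auto
    next
      case False then show ?thesis using f qn unfolding bs_def by auto
    qed
  qed
  have dom: "(\<Union>v\<in>set seq. cnbhd H v) = verts H"
  proof
    have "set seq \<subseteq> verts H" using lpseq unfolding lp_def by blast
    then show "(\<Union>v\<in>set seq. cnbhd H v) \<subseteq> verts H" using cnbhd_sub[of _ H] by blast
  next
    show "verts H \<subseteq> (\<Union>v\<in>set seq. cnbhd H v)"
    proof
      fix u assume "u \<in> verts H"
      then obtain b where b: "b \<in> {1..n}" "u \<in> B b" using verts_H by auto
      show "u \<in> (\<Union>v\<in>set seq. cnbhd H v)"
      proof (cases "b \<in> I")
        case True
        have g: "grundy_dom_seq (R b) (S b)" using Sg b(1) by blast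
        then have "(\<Union>v\<in>set (S b). cnbhd (R b) v) = B b" unfolding grundy_dom_seq_def legal_iff by blast
        then obtain x where x: "x \<in> set (S b)" "u \<in> cnbhd (R b) x" using b(2) by blast
        have xB: "x \<in> B b" using grundy_lp[OF b(1) g] x(1) by blast
        have "x \<in> set seq" using inseq[of b x] Q1 True x(1) unfolding bs_def by auto
        moreover have "u \<in> cnbhd H x" using cnbhd_H_R[OF b(1) xB] x(2) by blast
        ultimately show ?thesis by blast
      next
        case False
        have "\<exists>q\<in>set Q. q \<noteq> b \<and> b \<le> q + m \<and> q \<le> b + m"
        proof (cases "b < Min I")
          case True
          then show ?thesis using MinI Q1 I1(4) b(1) by (intro bexI[of _ "Min I"]) auto
        next
          case False
          show ?thesis
          proof (cases "Max I < b")
            case True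
            then show ?thesis using MinI Q1 I1(5) b(1) by (intro bexI[of _ "Max I"]) auto
          next
            case False
            then show ?thesis using Q6 \<open>\<not> b < Min I\<close> \<open>b \<notin> I\<close> by simp
          qed
        qed
        then obtain q where q: "q \<in> set Q" "q \<noteq> b" "b \<le> q + m" "q \<le> b + m" by blast
        obtain x where x: "x \<in> set (bs q)" "x \<in> B q" using bsB[OF q(1)] by blast
        have qn: "q \<in> {1..n}" using q(1) Qn by blast
        have "nP m q b" using q unfolding nP_def by simp
        then have "B b \<subseteq> cnbhd H x" using cnbhd_H_Bj[OF qn x(2) b(1)] by blast
        then show ?thesis using inseq[OF q(1) x(1)] b(2) by blast
      qed
    qed
  qed
  have legal: "legal_dom_seq H seq" unfolding legal_iff using lpseq dom by simp
  have distQ: "distinct Q" using Q3 strict_sorted_iff by blast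
  have "length seq = (\<Sum>q\<in>set Q. length (bs q))"
    unfolding seq_def length_concat map_map
    using sum_list_distinct_conv_sum_set[OF distQ, of "\<lambda>q. length (bs q)"] by (simp add: comp_def)
  also have "\<dots> = (\<Sum>q\<in>set Q. if q \<in> I then gamma_gr (R q) else 1)"
  proof (rule sum.cong)
    fix q assume "q \<in> set Q"
    then have qn: "q \<in> {1..n}" using Qn by blast
    show "length (bs q) = (if q \<in> I then gamma_gr (R q) else 1)"
      unfolding bs_def using grundy_length[OF finB[OF qn]] Sg qn by auto
  qed simp
  finally have len1: "length seq = (\<Sum>q\<in>set Q. if q \<in> I then gamma_gr (R q) else 1)" .
  have fQ: "finite (set Q)" by simp
  have "int (length seq) = (\<Sum>q\<in>set Q. int 1 + (if q \<in> I then int (gamma_gr (R q)) - 1 else 0))"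
    unfolding len1 of_nat_sum by (intro sum.cong) auto
  also have "\<dots> = int (card (set Q)) + (\<Sum>q\<in>set Q. if q \<in> I then int (gamma_gr (R q)) - 1 else 0)"
    by (simp add: sum.distrib)
  also have "(\<Sum>q\<in>set Q. if q \<in> I then int (gamma_gr (R q)) - 1 else 0) = (\<Sum>q\<in>set Q \<inter> I. int (gamma_gr (R q)) - 1)"
    using sum.inter_restrict[OF fQ, of "\<lambda>q. int (gamma_gr (R q)) - 1" I] by simp
  also have "set Q \<inter> I = I" using Q1 by blast
  also have "card (set Q) = length Q" using distinct_card[OF distQ] .
  finally have len2: "int (length seq) = int (length Q) + (\<Sum>q\<in>I. int (gamma_gr (R q)) - 1)" .
  have cI: "card I \<ge> 1" using fI I1(3) by (simp add: Suc_leI card_gt_0_iff)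
  have mm: "Min I \<le> Max I" using fI I1(3) by simp
  have "int (length Q) + int m * (int (card I) - 1) = int (Max I) + 1 - int (Min I)"
  proof -
    have "int (length Q + m * (card I - 1)) = int (Max I + 1 - Min I)" using Q7 by simp
    then show ?thesis using cI mm by (simp add: of_nat_diff)
  qed
  then have "int (length seq) = obj m R I + int m + 1"
    unfolding obj_def using len2 by (simp add: algebra_simps)
  then show ?thesis using legal unfolding seq_def Q_def bs_def by simp
qed

end


theorem theorem5:
  fixes n m :: nat and R :: "nat \<Rightarrow> 'a graph"
  assumes "1 \<le> m" and "m + 2 \<le> n"
    and "\<forall>i\<in>{1..n}. finite_graph (R i)"
    and "\<forall>i\<in>{1..n}. \<forall>j\<in>{1..n}. i \<noteq> j \<longrightarrow> verts (R i) \<inter> verts (R j) = {}"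
  shows "int (gamma_gr (xjoin (path_power n m) R))
           = Max (obj m R ` tildeI n m) + int m + 1 \<and>
         (\<forall>S f Istar.
            (\<forall>i\<in>{1..n}. grundy_dom_seq (R i) (S i)) \<and>
            (\<forall>j\<in>{1..n}. f j \<in> verts (R j)) \<and>
            Istar \<in> tildeI n m \<and>
            obj m R Istar = Max (obj m R ` tildeI n m)
            \<longrightarrow> grundy_dom_seq (xjoin (path_power n m) R)
                 (concat (map (\<lambda>j. if j \<in> Istar then S j else [f j]) (SP m Istar))))"
proof -
  interpret X: xj n m R using assms by unfold_locales auto
  have HH: "xjoin (path_power n m) R = X.H" unfolding X.H_def ..
  define Mx where "Mx = Max (obj m R ` tildeI n m)"
  have finTI: "finite (tildeI n m)"
  proof -
    have "tildeI n m \<subseteq> Pow {1..n}" unfolding tildeI_def indep_pp_def by auto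
    then show ?thesis using finite_subset by blast
  qed
  have "{1, n} \<in> tildeI n m"
    using assms(1,2) unfolding tildeI_def indep_pp_def by auto
  then have neTI: "tildeI n m \<noteq> {}" by blast
  have "Mx \<in> obj m R ` tildeI n m" unfolding Mx_def using finTI neTI by simp
  then obtain Is where Is: "Is \<in> tildeI n m" "obj m R Is = Mx" by blast
  have objle: "\<And>I. I \<in> tildeI n m \<Longrightarrow> obj m R I \<le> Mx" unfolding Mx_def using finTI by simp
  have finH: "finite (verts X.H)" unfolding X.verts_H using X.finB by blast
  have ub: "\<And>s. lp X.H s \<Longrightarrow> int (length s) \<le> Mx + int m + 1"
  proof -
    fix s assume "lp X.H s"
    then obtain I where "I \<in> tildeI n m" "int (length s) \<le> obj m R I + int m + 1" using X.upper by blast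
    then show "int (length s) \<le> Mx + int m + 1" using objle by fastforce
  qed
  have gle: "int (gamma_gr X.H) \<le> Mx + int m + 1"
  proof -
    obtain s where "legal_dom_seq X.H s" "length s = gamma_gr X.H" using gamma_attained[OF finH] by blast
    then show ?thesis using ub legal_iff by metis
  qed
  define S0 where "S0 i = (SOME s. grundy_dom_seq (R i) s)" for i
  have S0: "\<forall>i\<in>{1..n}. grundy_dom_seq (R i) (S0 i)"
  proof
    fix i assume "i \<in> {1..n}"
    then have "\<exists>s. grundy_dom_seq (R i) s" using grundy_exists X.finB by blast
    then show "grundy_dom_seq (R i) (S0 i)" unfolding S0_def by (rule someI_ex)
  qed
  define f0 where "f0 j = (SOME v. v \<in> verts (R j))" for j
  have f0: "\<forall>j\<in>{1..n}. f0 j \<in> verts (R j)"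
  proof
    fix j assume "j \<in> {1..n}"
    then have "\<exists>v. v \<in> verts (R j)" using X.neB by blast
    then show "f0 j \<in> verts (R j)" unfolding f0_def by (rule someI_ex)
  qed
  obtain sq where sq: "legal_dom_seq X.H sq" "int (length sq) = obj m R Is + int m + 1"
    using X.construct[OF Is(1) S0 f0] by blast
  have "length sq \<le> gamma_gr X.H" using lp_le_gamma(1)[OF finH] sq(1) legal_iff by metis
  then have part1: "int (gamma_gr X.H) = Mx + int m + 1" using gle sq(2) Is(2) by linarith
  have part2: "\<forall>S f Istar.
            (\<forall>i\<in>{1..n}. grundy_dom_seq (R i) (S i)) \<and>
            (\<forall>j\<in>{1..n}. f j \<in> verts (R j)) \<and>
            Istar \<in> tildeI n m \<and>
            obj m R Istar = Max (obj m R ` tildeI n m)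
            \<longrightarrow> grundy_dom_seq X.H
                 (concat (map (\<lambda>j. if j \<in> Istar then S j else [f j]) (SP m Istar)))"
  proof (intro allI impI)
    fix S f Istar
    assume a: "(\<forall>i\<in>{1..n}. grundy_dom_seq (R i) (S i)) \<and>
            (\<forall>j\<in>{1..n}. f j \<in> verts (R j)) \<and>
            Istar \<in> tildeI n m \<and>
            obj m R Istar = Max (obj m R ` tildeI n m)"
    define sq2 where "sq2 = concat (map (\<lambda>j. if j \<in> Istar then S j else [f j]) (SP m Istar))"
    have c: "legal_dom_seq X.H sq2" "int (length sq2) = obj m R Istar + int m + 1"
      using X.construct[of Istar S f] a unfolding sq2_def by auto
    have len: "length sq2 = gamma_gr X.H" using c(2) a part1 unfolding Mx_def by simp
    have "\<forall>s'. legal_dom_seq X.H s' \<longrightarrow> length s' \<le> length sq2"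
      using lp_le_gamma(1)[OF finH] legal_iff len by metis
    then show "grundy_dom_seq X.H sq2" unfolding grundy_dom_seq_def using c(1) by blast
  qed
  show ?thesis using part1 part2 unfolding HH Mx_def by blast
qed


end
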